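(* Let $k\ge l\ge0$ and $H\in\mathcal{H}_{k,l}(\mathbb{R}^{2m},\mathbb{C})$. For every integer $i>0$, $$A\,C^iH=c_i(k,l)\,C^{i-1}H,\qquad c_i(k,l)=i\,\frac{(k+\frac m2+i-1)(k+l+m+i-3)}{k+\frac m2+i-2}.$$
   Context: Fix an integer $m>4$. For $x,u\in\mathbb{R}^m$ let $\mathcal{P}_{p,q}(\mathbb{R}^{2m},\mathbb{C})$ be complex polynomials of degree $p$ in $x$ and $q$ in $u$. Write $|x|^2=\sum x_j^2$, $\langle u,x\rangle=\sum u_jx_j$, $\Delta_x=\sum\partial_{x_j}^2$, $\Delta_u=\sum\partial_{u_j}^2$, $\langle\partial_u,\partial_x\rangle=\sum\partial_{u_j}\partial_{x_j}$, $\langle x,\partial_u\rangle=\sum x_j\partial_{u_j}$, $\ker(D_1,\dots,D_r)=\bigcap\ker D_i$. Every $P\in\mathcal{P}_{p,q}$ is uniquely $\sum_{a,b\ge0}|x|^{2a}|u|^{2b}H'_{p-2a,q-2b}$ with $H'_{p-2a,q-2b}\in\mathcal{P}_{p-2a,q-2b}\cap\ker(\Delta_x,\Delta_u)$; $\pi_{\mathfrak{s}}P:=H'_{p,q}$. On $\ker(\Delta_x,\Delta_u)$: $A=\pi_{\mathfrak{s}}\langle\partial_u,\partial_x\rangle$, $C=\pi_{\mathfrak{s}}\langle u,x\rangle$. For $k\ge l\ge0$, $\mathcal{H}_{k,l}=\mathcal{P}_{k,l}\cap\ker(\Delta_x,\Delta_u,\langle\partial_u,\partial_x\rangle,\langle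 x,\partial_u\rangle)$. *)

theory Defs
  imports Complex_Main "HOL-Library.Poly_Mapping"
begin

text \<open>Complex polynomials in the 2m real variables x_1..x_m, u_1..u_m.
  The index type 'n (finite, CARD('n) = m) labels coordinates; Inl j is x_j, Inr j is u_j.\<close>

type_synonym 'n mpoly = "(('n + 'n) \<Rightarrow>\<^sub>0 nat) \<Rightarrow>\<^sub>0 complex"

definition const :: "complex \<Rightarrow> 'n mpoly" where
  "const c = Poly_Mapping.single 0 c"

definition Xv :: "'n \<Rightarrow> 'n mpoly" where
  "Xv j = Poly_Mapping.single (Poly_Mapping.single (Inl j) 1) 1"

definition Uv :: "'n \<Rightarrow> 'n mpoly" where
  "Uv j = Poly_Mapping.single (Poly_Mapping.single (Inr j) 1) 1"

definition pd :: "('n + 'n) \<Rightarrow> 'n mpoly \<Rightarrow> 'n mpoly" where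
  "pd v P = (\<Sum>\<alpha>\<in>Poly_Mapping.keys P. Poly_Mapping.single (\<alpha> - Poly_Mapping.single v (1::nat))
                              (of_nat (Poly_Mapping.lookup (\<alpha>::('n + 'n) \<Rightarrow>\<^sub>0 nat) v) * Poly_Mapping.lookup P \<alpha>))"

definition degx :: "(('n::finite + 'n) \<Rightarrow>\<^sub>0 nat) \<Rightarrow> nat" where
  "degx \<alpha> = (\<Sum>j\<in>UNIV. Poly_Mapping.lookup \<alpha> (Inl j))"

definition degu :: "(('n::finite + 'n) \<Rightarrow>\<^sub>0 nat) \<Rightarrow> nat" where
  "degu \<alpha> = (\<Sum>j\<in>UNIV. Poly_Mapping.lookup \<alpha> (Inr j))"

definition bihom :: "nat \<Rightarrow> nat \<Rightarrow> 'n::finite mpoly \<Rightarrow> bool" where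
  "bihom p q P \<longleftrightarrow> (\<forall>\<alpha>\<in>Poly_Mapping.keys P. degx \<alpha> = p \<and> degu \<alpha> = q)"

definition Lap_x :: "'n::finite mpoly \<Rightarrow> 'n mpoly" where
  "Lap_x P = (\<Sum>j\<in>UNIV. pd (Inl j) (pd (Inl j) P))"

definition Lap_u :: "'n::finite mpoly \<Rightarrow> 'n mpoly" where
  "Lap_u P = (\<Sum>j\<in>UNIV. pd (Inr j) (pd (Inr j) P))"

definition Dux :: "'n::finite mpoly \<Rightarrow> 'n mpoly" where
  "Dux P = (\<Sum>j\<in>UNIV. pd (Inr j) (pd (Inl j) P))"

definition Xdu :: "'n::finite mpoly \<Rightarrow> 'n mpoly" where
  "Xdu P = (\<Sum>j\<in>UNIV. Xv j * pd (Inr j) P)"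

definition normx2 :: "'n::finite mpoly" where
  "normx2 = (\<Sum>j\<in>UNIV. Xv j ^ 2)"

definition normu2 :: "'n::finite mpoly" where
  "normu2 = (\<Sum>j\<in>UNIV. Uv j ^ 2)"

definition ux :: "'n::finite mpoly" where
  "ux = (\<Sum>j\<in>UNIV. Uv j * Xv j)"

definition harm2 :: "'n::finite mpoly \<Rightarrow> bool" where
  "harm2 P \<longleftrightarrow> Lap_x P = 0 \<and> Lap_u P = 0"

definition pi_hom :: "nat \<Rightarrow> nat \<Rightarrow> 'n::finite mpoly \<Rightarrow> 'n mpoly" where
  "pi_hom p q P = (THE H. \<exists>Hf :: nat \<Rightarrow> nat \<Rightarrow> 'n mpoly.
      (\<forall>a b. 2*a \<le> p \<and> 2*b \<le> q \<longrightarrow> bihom (p - 2*a) (q - 2*b) (Hf a b) \<and> harm2 (Hf a b)) \<and>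
      P = (\<Sum>a\<le>p div 2. \<Sum>b\<le>q div 2. normx2 ^ a * normu2 ^ b * Hf a b) \<and>
      H = Hf 0 0)"

definition bipart :: "nat \<Rightarrow> nat \<Rightarrow> 'n::finite mpoly \<Rightarrow> 'n mpoly" where
  "bipart p q P = (\<Sum>\<alpha>\<in>{\<alpha>\<in>Poly_Mapping.keys P. degx \<alpha> = p \<and> degu \<alpha> = q}. Poly_Mapping.single \<alpha> (Poly_Mapping.lookup P \<alpha>))"

definition pi_s :: "'n::finite mpoly \<Rightarrow> 'n mpoly" where
  "pi_s P = (\<Sum>(p,q)\<in>(\<lambda>\<alpha>. (degx \<alpha>, degu \<alpha>)) ` Poly_Mapping.keys P. pi_hom p q (bipart p q P))"

definition Aop :: "'n::finite mpoly \<Rightarrow> 'n mpoly" where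
  "Aop P = pi_s (Dux P)"

definition Cop :: "'n::finite mpoly \<Rightarrow> 'n mpoly" where
  "Cop P = pi_s (ux * P)"

definition Hkl :: "nat \<Rightarrow> nat \<Rightarrow> 'n::finite mpoly set" where
  "Hkl k l = {H. bihom k l H \<and> Lap_x H = 0 \<and> Lap_u H = 0 \<and> Dux H = 0 \<and> Xdu H = 0}"

definition cconst :: "nat \<Rightarrow> nat \<Rightarrow> nat \<Rightarrow> nat \<Rightarrow> real" where
  "cconst m i k l = real i * (real k + real m / 2 + real i - 1) * (real k + real l + real m + real i - 3)
                     / (real k + real m / 2 + real i - 2)"

end

theory Submission
  imports Defs
begin


abbreviation dl :: "('n + 'n) \<Rightarrow> ('n + 'n) \<Rightarrow>\<^sub>0 nat" where "dl v \<equiv> Poly_Mapping.single v 1"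

lemma poly_expand: "(P::'a mpoly) = (\<Sum>\<alpha>\<in>Poly_Mapping.keys P. Poly_Mapping.single \<alpha> (Poly_Mapping.lookup P \<alpha>))"
proof (rule poly_mapping_eqI)
  fix \<beta>
  show "Poly_Mapping.lookup P \<beta> = Poly_Mapping.lookup (\<Sum>\<alpha>\<in>Poly_Mapping.keys P. Poly_Mapping.single \<alpha> (Poly_Mapping.lookup P \<alpha>)) \<beta>"
    by (simp add: lookup_sum lookup_single when_def in_keys_iff)
qed

lemma minus_dl_eq:
  fixes \<alpha> \<beta> :: "('n + 'n) \<Rightarrow>\<^sub>0 nat"
  assumes "Poly_Mapping.lookup \<alpha> v \<noteq> 0"
  shows "(\<alpha> - dl v = \<beta>) \<longleftrightarrow> (\<alpha> = \<beta> + dl v)"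
proof
  assume h: "\<alpha> - dl v = \<beta>"
  show "\<alpha> = \<beta> + dl v"
  proof (rule poly_mapping_eqI)
    fix w show "Poly_Mapping.lookup \<alpha> w = Poly_Mapping.lookup (\<beta> + dl v) w"
      using assms unfolding h[symmetric]
      by (auto simp: lookup_minus lookup_add lookup_single when_def)
  qed
next
  assume h: "\<alpha> = \<beta> + dl v"
  show "\<alpha> - dl v = \<beta>"
    by (rule poly_mapping_eqI) (simp add: h lookup_minus lookup_add lookup_single when_def)
qed

lemma lookup_pd:
  "Poly_Mapping.lookup (pd v P) \<beta> = of_nat (Poly_Mapping.lookup \<beta> v + 1) * Poly_Mapping.lookup P (\<beta> + dl v)"
proof -
  have "Poly_Mapping.lookup (pd v P) \<beta> =
     (\<Sum>\<alpha>\<in>Poly_Mapping.keys P. (of_nat (Poly_Mapping.lookup \<alpha> v) * Poly_Mapping.lookup P \<alpha>) when \<alpha> - dl v = \<beta>)"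
    by (simp add: pd_def lookup_sum lookup_single when_def eq_commute)
  also have "\<dots> = (\<Sum>\<alpha>\<in>Poly_Mapping.keys P. (of_nat (Poly_Mapping.lookup \<beta> v + 1) * Poly_Mapping.lookup P \<alpha>) when \<alpha> = \<beta> + dl v)"
  proof (rule sum.cong[OF refl])
    fix \<alpha> show "((of_nat (Poly_Mapping.lookup \<alpha> v) * Poly_Mapping.lookup P \<alpha>) when \<alpha> - dl v = \<beta>) =
       ((of_nat (Poly_Mapping.lookup \<beta> v + 1) * Poly_Mapping.lookup P \<alpha>) when \<alpha> = \<beta> + dl v)"
    proof (cases "Poly_Mapping.lookup \<alpha> v = 0")
      case True
      then have "\<alpha> \<noteq> \<beta> + dl v" by (auto simp: lookup_add)
      then show ?thesis using True by (simp add: when_def)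
    next
      case False
      then show ?thesis
        by (cases "\<alpha> = \<beta> + dl v") (use minus_dl_eq[OF False, of \<beta>] in \<open>auto simp: when_def lookup_add\<close>)
    qed
  qed
  also have "\<dots> = of_nat (Poly_Mapping.lookup \<beta> v + 1) * Poly_Mapping.lookup P (\<beta> + dl v)"
    by (simp add: when_def in_keys_iff)
  finally show ?thesis .
qed

lemma pd_add: "pd v (P + Q) = pd v P + pd v Q"
  by (rule poly_mapping_eqI) (simp add: lookup_pd lookup_add algebra_simps)
lemma pd_zero[simp]: "pd v 0 = 0"
  by (rule poly_mapping_eqI) (simp add: lookup_pd)
lemma pd_uminus: "pd v (- P) = - pd v P"
  by (rule poly_mapping_eqI) (simp add: lookup_pd)
lemma pd_diff: "pd v (P - Q) = pd v P - pd v Q"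
  by (rule poly_mapping_eqI) (simp add: lookup_pd lookup_minus algebra_simps)
lemma pd_sum: "pd v (sum f S) = (\<Sum>x\<in>S. pd v (f x))"
  by (induction S rule: infinite_finite_induct) (simp_all add: pd_add)

lemma pd_single: "pd v (Poly_Mapping.single \<alpha> c) = Poly_Mapping.single (\<alpha> - dl v) (of_nat (Poly_Mapping.lookup \<alpha> v) * c)"
proof (rule poly_mapping_eqI)
  fix \<beta>
  show "Poly_Mapping.lookup (pd v (Poly_Mapping.single \<alpha> c)) \<beta> =
    Poly_Mapping.lookup (Poly_Mapping.single (\<alpha> - dl v) (of_nat (Poly_Mapping.lookup \<alpha> v) * c)) \<beta>"
  proof (cases "Poly_Mapping.lookup \<alpha> v = 0")
    case True
    then have "\<alpha> \<noteq> \<beta> + dl v" by (auto simp: lookup_add)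
    then show ?thesis using True by (simp add: lookup_pd lookup_single when_def)
  next
    case False
    show ?thesis
      by (cases "\<alpha> = \<beta> + dl v") (use minus_dl_eq[OF False, of \<beta>] in \<open>auto simp: lookup_pd lookup_single when_def lookup_add\<close>)
  qed
qed

lemma pd_mono_mult: "pd v (Poly_Mapping.single \<alpha> a * Poly_Mapping.single \<beta> b) =
   pd v (Poly_Mapping.single \<alpha> a) * Poly_Mapping.single \<beta> b + Poly_Mapping.single \<alpha> a * pd v (Poly_Mapping.single \<beta> (b::complex))"
proof -
  have e1: "\<alpha> - dl v + \<beta> = \<alpha> + \<beta> - dl v" if "Poly_Mapping.lookup \<alpha> v \<noteq> 0"
    by (rule poly_mapping_eqI) (use that in \<open>auto simp: lookup_add lookup_minus lookup_single when_def\<close>)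
  have e2: "\<alpha> + (\<beta> - dl v) = \<alpha> + \<beta> - dl v" if "Poly_Mapping.lookup \<beta> v \<noteq> 0"
    by (rule poly_mapping_eqI) (use that in \<open>auto simp: lookup_add lookup_minus lookup_single when_def\<close>)
  have L: "pd v (Poly_Mapping.single \<alpha> a * Poly_Mapping.single \<beta> b) =
     Poly_Mapping.single (\<alpha> + \<beta> - dl v) (of_nat (Poly_Mapping.lookup \<alpha> v) * (a * b)) +
     Poly_Mapping.single (\<alpha> + \<beta> - dl v) (of_nat (Poly_Mapping.lookup \<beta> v) * (a * b))"
    by (simp only: mult_single pd_single lookup_add of_nat_add distrib_right single_add)
  have R1: "pd v (Poly_Mapping.single \<alpha> a) * Poly_Mapping.single \<beta> b =
     Poly_Mapping.single (\<alpha> + \<beta> - dl v) (of_nat (Poly_Mapping.lookup \<alpha> v) * (a * b))"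
  proof (cases "Poly_Mapping.lookup \<alpha> v = 0")
    case True then show ?thesis by (simp add: pd_single)
  next
    case False then show ?thesis by (simp only: pd_single mult_single e1[OF False] mult.assoc)
  qed
  have R2: "Poly_Mapping.single \<alpha> a * pd v (Poly_Mapping.single \<beta> b) =
     Poly_Mapping.single (\<alpha> + \<beta> - dl v) (of_nat (Poly_Mapping.lookup \<beta> v) * (a * b))"
  proof (cases "Poly_Mapping.lookup \<beta> v = 0")
    case True then show ?thesis by (simp add: pd_single)
  next
    case False then show ?thesis by (simp only: pd_single mult_single e2[OF False] mult.left_commute)
  qed
  show ?thesis by (simp only: L R1 R2)
qed

lemma pd_mult: "pd v (P * Q) = pd v P * Q + P * pd v (Q::'n mpoly)"
proof -
  let ?s = "\<lambda>\<alpha>. Poly_Mapping.single \<alpha> (Poly_Mapping.lookup P \<alpha>)"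
  let ?t = "\<lambda>\<alpha>. Poly_Mapping.single \<alpha> (Poly_Mapping.lookup Q \<alpha>)"
  have P: "sum ?s (Poly_Mapping.keys P) = P" by (rule poly_expand[symmetric])
  have Q: "sum ?t (Poly_Mapping.keys Q) = Q" by (rule poly_expand[symmetric])
  have "pd v (sum ?s (Poly_Mapping.keys P) * sum ?t (Poly_Mapping.keys Q)) =
     pd v (sum ?s (Poly_Mapping.keys P)) * sum ?t (Poly_Mapping.keys Q) + sum ?s (Poly_Mapping.keys P) * pd v (sum ?t (Poly_Mapping.keys Q))"
    by (simp add: sum_product pd_sum pd_mono_mult sum.distrib)
  then show ?thesis by (simp only: P Q)
qed

lemma pd_Xv[simp]: "pd v (Xv j) = (if v = Inl j then 1 else 0)"
  by (auto simp: Xv_def pd_single lookup_single when_def)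
lemma pd_Uv[simp]: "pd v (Uv j) = (if v = Inr j then 1 else 0)"
  by (auto simp: Uv_def pd_single lookup_single when_def)
lemma pd_const[simp]: "pd v (const c) = 0"
  by (simp add: const_def pd_single)
lemma pd_one[simp]: "pd v 1 = 0"
  by (metis const_def pd_const single_one)
lemma pd_numeral[simp]: "pd v (numeral n) = 0"
  by (metis const_def pd_const single_numeral)
lemma pd_of_nat[simp]: "pd v (of_nat n) = 0"
  by (metis const_def pd_const single_of_nat)

lemma pd_commute: "pd v (pd w P) = pd w (pd v P)"
proof (rule poly_mapping_eqI)
  fix \<beta>
  show "Poly_Mapping.lookup (pd v (pd w P)) \<beta> = Poly_Mapping.lookup (pd w (pd v P)) \<beta>"
    by (cases "v = w") (auto simp: lookup_pd lookup_add lookup_single when_def algebra_simps)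
qed


definition fo :: "('n::finite \<Rightarrow> 'n mpoly) \<Rightarrow> ('n \<Rightarrow> 'n + 'n) \<Rightarrow> 'n mpoly \<Rightarrow> 'n mpoly" where
  "fo a v X = (\<Sum>j\<in>UNIV. a j * pd (v j) X)"
definition so :: "('n::finite \<Rightarrow> 'n + 'n) \<Rightarrow> ('n \<Rightarrow> 'n + 'n) \<Rightarrow> 'n mpoly \<Rightarrow> 'n mpoly" where
  "so v w X = (\<Sum>j\<in>UNIV. pd (v j) (pd (w j) X))"

lemma fo_add[simp]: "fo a v (X + Y) = fo a v X + fo a v Y"
  by (simp add: fo_def pd_add distrib_left sum.distrib)
lemma fo_zero[simp]: "fo a v 0 = 0"
  by (simp add: fo_def)
lemma fo_uminus[simp]: "fo a v (- X) = - fo a v X"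
  by (simp add: fo_def pd_uminus sum_negf)
lemma fo_diff[simp]: "fo a v (X - Y) = fo a v X - fo a v Y"
  by (simp add: fo_def pd_diff right_diff_distrib sum_subtractf)
lemma fo_sum: "fo a v (sum f S) = (\<Sum>x\<in>S. fo a v (f x))"
  by (induction S rule: infinite_finite_induct) simp_all
lemma fo_mult[simp]: "fo a v (f * X) = f * fo a v X + fo a v f * X"
  by (simp add: fo_def pd_mult distrib_left sum.distrib sum_distrib_left sum_distrib_right algebra_simps)
lemma fo_scale: "fo (\<lambda>j. c * a j) v X = c * fo a v X"
  by (simp add: fo_def sum_distrib_left algebra_simps)
lemma fo_zero_coeff[simp]: "fo (\<lambda>j. 0) v X = 0"
  by (simp add: fo_def)
lemma fo_const[simp]: "fo a v (const c) = 0" "fo a v 1 = 0" "fo a v (numeral n) = 0" "fo a v (of_nat k) = 0"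
  by (simp_all add: fo_def)

lemma so_add[simp]: "so v w (X + Y) = so v w X + so v w Y"
  by (simp add: so_def pd_add sum.distrib)
lemma so_zero[simp]: "so v w 0 = 0"
  by (simp add: so_def)
lemma so_uminus[simp]: "so v w (- X) = - so v w X"
  by (simp add: so_def pd_uminus sum_negf)
lemma so_diff[simp]: "so v w (X - Y) = so v w X - so v w Y"
  by (simp add: so_def pd_diff sum_subtractf)
lemma so_sum: "so v w (sum f S) = (\<Sum>x\<in>S. so v w (f x))"
  by (induction S rule: infinite_finite_induct) simp_all
lemma so_const[simp]: "so v w (const c) = 0" "so v w 1 = 0" "so v w (numeral n) = 0" "so v w (of_nat k) = 0"
  by (simp_all add: so_def)
lemma so_mult[simp]: "so v w (f * X) = f * so v w X + fo (\<lambda>j. pd (v j) f) w X + fo (\<lambda>j. pd (w j) f) v X + so v w f * X"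
  by (simp add: so_def fo_def pd_mult pd_add distrib_left sum.distrib sum_distrib_left sum_distrib_right algebra_simps)

lemma fo_fo: "fo a v (fo b w X) = fo b w (fo a v X) + fo (\<lambda>k. fo a v (b k)) w X - fo (\<lambda>j. fo b w (a j)) v X"
proof -
  define A1 where "A1 = (\<Sum>j\<in>UNIV. \<Sum>k\<in>UNIV. a j * pd (v j) (b k) * pd (w k) X)"
  define A2 where "A2 = (\<Sum>j\<in>UNIV. \<Sum>k\<in>UNIV. a j * b k * pd (v j) (pd (w k) X))"
  define B1 where "B1 = (\<Sum>k\<in>UNIV. \<Sum>j\<in>UNIV. b k * pd (w k) (a j) * pd (v j) X)"
  define B2 where "B2 = (\<Sum>k\<in>UNIV. \<Sum>j\<in>UNIV. b k * a j * pd (w k) (pd (v j) X))"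
  have 1: "fo a v (fo b w X) = A1 + A2"
    unfolding A1_def A2_def fo_def
    by (simp add: pd_sum pd_mult sum_distrib_left distrib_left sum.distrib mult.assoc mult.left_commute)
  have 2: "fo b w (fo a v X) = B1 + B2"
    unfolding B1_def B2_def fo_def
    by (simp add: pd_sum pd_mult sum_distrib_left distrib_left sum.distrib mult.assoc mult.left_commute)
  have 3: "A2 = B2"
    unfolding A2_def B2_def by (subst sum.swap) (simp add: pd_commute mult.commute)
  have 4: "fo (\<lambda>k. fo a v (b k)) w X = A1"
    unfolding A1_def fo_def sum_distrib_right by (rule sum.swap)
  have 5: "fo (\<lambda>j. fo b w (a j)) v X = B1"
    unfolding B1_def fo_def sum_distrib_right by (rule sum.swap)
  show ?thesis by (simp add: 1 2 3 4 5)
qed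

lemma so_so: "so v w (so v' w' X) = so v' w' (so v w X)"
  unfolding so_def by (simp add: pd_sum) (subst sum.swap, simp add: pd_commute)

lemma so_fo: "so v w (fo b u X) = fo b u (so v w X) + fo (\<lambda>k. so v w (b k)) u X
   + (\<Sum>k\<in>UNIV. \<Sum>j\<in>UNIV. pd (w j) (b k) * pd (v j) (pd (u k) X))
   + (\<Sum>k\<in>UNIV. \<Sum>j\<in>UNIV. pd (v j) (b k) * pd (w j) (pd (u k) X))"
proof -
  define A1 where "A1 = (\<Sum>j\<in>UNIV. \<Sum>k\<in>UNIV. pd (v j) (pd (w j) (b k)) * pd (u k) X)"
  define A2 where "A2 = (\<Sum>j\<in>UNIV. \<Sum>k\<in>UNIV. pd (w j) (b k) * pd (v j) (pd (u k) X))"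
  define A3 where "A3 = (\<Sum>j\<in>UNIV. \<Sum>k\<in>UNIV. pd (v j) (b k) * pd (w j) (pd (u k) X))"
  define A4 where "A4 = (\<Sum>j\<in>UNIV. \<Sum>k\<in>UNIV. b k * pd (v j) (pd (w j) (pd (u k) X)))"
  have 1: "so v w (fo b u X) = A1 + A2 + A3 + A4"
    unfolding A1_def A2_def A3_def A4_def so_def fo_def
    by (simp add: pd_sum pd_mult pd_add sum.distrib add.assoc)
  have 2: "fo b u (so v w X) = A4"
    unfolding A4_def so_def fo_def
    by (simp add: pd_sum sum_distrib_left) (subst sum.swap, simp add: pd_commute)
  have 3: "fo (\<lambda>k. so v w (b k)) u X = A1"
    unfolding A1_def so_def fo_def sum_distrib_right by (rule sum.swap)
  have 4: "A2 = (\<Sum>k\<in>UNIV. \<Sum>j\<in>UNIV. pd (w j) (b k) * pd (v j) (pd (u k) X))"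
    unfolding A2_def by (rule sum.swap)
  have 5: "A3 = (\<Sum>k\<in>UNIV. \<Sum>j\<in>UNIV. pd (v j) (b k) * pd (w j) (pd (u k) X))"
    unfolding A3_def by (rule sum.swap)
  show ?thesis unfolding 1 2 3 4[symmetric] 5[symmetric] by (simp add: algebra_simps)
qed

abbreviation "Nx \<equiv> fo Xv Inl"
abbreviation "Nu \<equiv> fo Uv Inr"
abbreviation "Eo \<equiv> fo Uv Inl"
abbreviation "Fo \<equiv> fo Xv Inr"
abbreviation "Lx \<equiv> so Inl Inl"
abbreviation "Lu \<equiv> so Inr Inr"
abbreviation "Do \<equiv> so Inr Inl"

lemma Xdu_fo: "Xdu = Fo" by (rule ext) (simp add: Xdu_def fo_def)
lemma Dux_so: "Dux = Do" by (rule ext) (simp add: Dux_def so_def)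
lemma Lap_x_so: "Lap_x = Lx" by (rule ext) (simp add: Lap_x_def so_def)
lemma Lap_u_so: "Lap_u = Lu" by (rule ext) (simp add: Lap_u_def so_def)

lemma mult_if01[simp]: "(x::'a::semiring_1) * (if c then 1 else 0) = (if c then x else 0)"
    "(if c then 1 else 0) * x = (if c then x else 0)"
  by simp_all
lemma pd_if01[simp]: "pd v (if c then 1 else 0) = 0"
  by simp

lemma fo_Xv[simp]: "fo a Inl (Xv k) = a k" "fo a Inr (Xv k) = 0"
  by (simp_all add: fo_def)
lemma fo_Uv[simp]: "fo a Inr (Uv k) = a k" "fo a Inl (Uv k) = 0"
  by (simp_all add: fo_def)
lemma so_Xv[simp]: "so v w (Xv k) = 0" by (simp add: so_def)
lemma so_Uv[simp]: "so v w (Uv k) = 0" by (simp add: so_def)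


abbreviation mm :: "'n::finite mpoly" where "mm \<equiv> of_nat (card (UNIV :: 'n set))"
lemma pd_ux[simp]: "pd (Inl j) ux = Uv j" "pd (Inr j) ux = Xv j"
  by (simp_all add: ux_def pd_sum pd_mult)
lemma pd_nx2[simp]: "pd (Inl j) normx2 = 2 * Xv j" "pd (Inr j) normx2 = 0"
  by (simp_all add: normx2_def pd_sum pd_mult power2_eq_square sum.distrib flip: sum_distrib_left)
lemma pd_nu2[simp]: "pd (Inr j) normu2 = 2 * Uv j" "pd (Inl j) normu2 = 0"
  by (simp_all add: normu2_def pd_sum pd_mult power2_eq_square sum.distrib flip: sum_distrib_left)
lemma fo_vals[simp]:
  "Nx (ux::'n::finite mpoly) = ux" "Nu (ux::'n mpoly) = ux" "Eo (ux::'n mpoly) = normu2" "Fo (ux::'n mpoly) = normx2"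
  "Nx (normx2::'n mpoly) = 2 * normx2" "Nu (normx2::'n mpoly) = 0" "Eo (normx2::'n mpoly) = 2 * ux" "Fo (normx2::'n mpoly) = 0"
  "Nx (normu2::'n mpoly) = 0" "Nu (normu2::'n mpoly) = 2 * normu2" "Eo (normu2::'n mpoly) = 0" "Fo (normu2::'n mpoly) = 2 * ux"
  unfolding fo_def pd_ux pd_nx2 pd_nu2
  by (simp_all add: ux_def normx2_def normu2_def power2_eq_square mult.commute mult.left_commute sum_distrib_left)

lemma so_vals[simp]:
  "Lx (ux::'n::finite mpoly) = 0" "Lu (ux::'n mpoly) = 0" "Do (ux::'n mpoly) = mm"
  "Lx (normx2::'n mpoly) = 2 * mm" "Lu (normx2::'n mpoly) = 0" "Do (normx2::'n mpoly) = 0"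
  "Lx (normu2::'n mpoly) = 0" "Lu (normu2::'n mpoly) = 2 * mm" "Do (normu2::'n mpoly) = 0"
  unfolding so_def pd_ux pd_nx2 pd_nu2
  by (simp_all add: pd_mult flip: sum_distrib_left)


lemma R1: "Fo (Eo X) = Eo (Fo X) + Nx X - Nu X" using fo_fo[of Xv Inr Uv Inl X] by simp
lemma R2: "Nx (Eo X) = Eo (Nx X) - Eo X" using fo_fo[of Xv Inl Uv Inl X] by simp
lemma R3: "Nx (Fo X) = Fo (Nx X) + Fo X" using fo_fo[of Xv Inl Xv Inr X] by simp
lemma R4: "Nu (Eo X) = Eo (Nu X) + Eo X" using fo_fo[of Uv Inr Uv Inl X] by simp
lemma R5: "Nu (Fo X) = Fo (Nu X) - Fo X" using fo_fo[of Uv Inr Xv Inr X] by simp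
lemma R6: "Nu (Nx X) = Nx (Nu X)" using fo_fo[of Uv Inr Xv Inl X] by simp

lemma R7: "Do (Eo X) = Eo (Do X) + Lx X" using so_fo[of Inr Inl Uv Inl X] by (simp add: so_def)
lemma R8: "Do (Fo X) = Fo (Do X) + Lu X" using so_fo[of Inr Inl Xv Inr X] by (simp add: so_def pd_commute)
lemma R9: "Lx (Eo X) = Eo (Lx X)" using so_fo[of Inl Inl Uv Inl X] by (simp add: so_def)
lemma R10: "Lx (Fo X) = Fo (Lx X) + 2 * Do X" using so_fo[of Inl Inl Xv Inr X] by (simp add: so_def pd_commute)
lemma R11: "Lu (Eo X) = Eo (Lu X) + 2 * Do X" using so_fo[of Inr Inr Uv Inl X] by (simp add: so_def)
lemma R12: "Lu (Fo X) = Fo (Lu X)" using so_fo[of Inr Inr Xv Inr X] by (simp add: so_def)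
lemma R13: "Lx (Do X) = Do (Lx X)" by (rule so_so)
lemma R14: "Lu (Do X) = Do (Lu X)" by (rule so_so)
lemma R15: "Lu (Lx X) = Lx (Lu X)" by (rule so_so)
lemma R16: "Nx (Do X) = Do (Nx X) - Do X" using so_fo[of Inr Inl Xv Inl X] by (simp add: so_def)
lemma R17: "Nu (Do X) = Do (Nu X) - Do X" using so_fo[of Inr Inl Uv Inr X] by (simp add: so_def pd_commute)
lemma R18: "Nx (Lx X) = Lx (Nx X) - 2 * Lx X" using so_fo[of Inl Inl Xv Inl X] by (simp add: so_def)
lemma R19: "Nx (Lu X) = Lu (Nx X)" using so_fo[of Inr Inr Xv Inl X] by (simp add: so_def)
lemma R20: "Nu (Lx X) = Lx (Nu X)" using so_fo[of Inl Inl Uv Inr X] by (simp add: so_def)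
lemma R21: "Nu (Lu X) = Lu (Nu X) - 2 * Lu X" using so_fo[of Inr Inr Uv Inr X] by (simp add: so_def)

lemmas Rrules = R1 R2 R3 R4 R5 R6 R7 R8 R9 R10 R11 R12 R13 R14 R15 R16 R17 R18 R19 R20 R21
declare fo_scale[simp]

definition Om :: "'n::finite mpoly \<Rightarrow> 'n mpoly" where
  "Om X = normx2 * Lx X + normu2 * Lu X + 2 * (ux * Do X) - Fo (Eo X) - Eo (Fo X) - Nx (Nx X) - Nu (Nu X)
     - (mm - 3) * (Nx X + Nu X)"

lemma Om_ux: "Om (ux * X) = ux * Om X"
  unfolding Om_def
  apply (simp add: Rrules mult.assoc)
  apply (simp add: algebra_simps)
  done

lemma Om_nx2: "Om (normx2 * X) = normx2 * Om X"
  unfolding Om_def by (simp add: Rrules mult.assoc) (simp add: algebra_simps)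
lemma Om_nu2: "Om (normu2 * X) = normu2 * Om X"
  unfolding Om_def by (simp add: Rrules mult.assoc) (simp add: algebra_simps)
lemma Om_Eo: "Om (Eo X) = Eo (Om X)"
  unfolding Om_def by (simp add: Rrules mult.assoc) (simp add: algebra_simps)
lemma Om_Fo: "Om (Fo X) = Fo (Om X)"
  unfolding Om_def by (simp add: Rrules mult.assoc) (simp add: algebra_simps)
lemma Om_Do: "Om (Do X) = Do (Om X)"
  unfolding Om_def by (simp add: Rrules mult.assoc pd_diff) (simp add: algebra_simps)


lemma lookup_cmult: "Poly_Mapping.lookup (Poly_Mapping.single 0 c * X) \<beta> = c * Poly_Mapping.lookup X \<beta>"
  by (simp add: mult_map_scale_conv_mult[symmetric] map.rep_eq when_def)
lemma lookup_ofnat_mult: "Poly_Mapping.lookup (of_nat n * (X::'n mpoly)) \<beta> = of_nat n * Poly_Mapping.lookup X \<beta>"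
  by (metis lookup_cmult of_nat_single comp_apply)
lemma lookup_const_mult: "Poly_Mapping.lookup (const c * X) \<beta> = c * Poly_Mapping.lookup X \<beta>"
  by (simp add: const_def lookup_cmult)

lemma sum_single: "(\<Sum>j\<in>S. Poly_Mapping.single \<alpha> (f j)) = Poly_Mapping.single \<alpha> (sum f S)"
  by (rule poly_mapping_eqI) (simp add: lookup_sum lookup_single when_def)

lemma fo_single_var:
  assumes "\<And>j. a j = Poly_Mapping.single (dl (v j)) 1"
  shows "fo a v (Poly_Mapping.single \<alpha> c) = Poly_Mapping.single \<alpha> (of_nat (\<Sum>j\<in>UNIV. Poly_Mapping.lookup \<alpha> (v j)) * c)"
proof -
  have "a j * pd (v j) (Poly_Mapping.single \<alpha> c) = Poly_Mapping.single \<alpha> (of_nat (Poly_Mapping.lookup \<alpha> (v j)) * c)" for j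
  proof (cases "Poly_Mapping.lookup \<alpha> (v j) = 0")
    case True then show ?thesis by (simp add: assms pd_single)
  next
    case False
    have "dl (v j) + (\<alpha> - dl (v j)) = \<alpha>"
      by (rule poly_mapping_eqI) (use False in \<open>auto simp: lookup_add lookup_minus lookup_single when_def\<close>)
    then show ?thesis by (simp add: assms pd_single mult_single)
  qed
  then show ?thesis
    by (simp add: fo_def sum_single sum_distrib_right)
qed

lemma Nx_single: "Nx (Poly_Mapping.single \<alpha> c) = Poly_Mapping.single \<alpha> (of_nat (degx \<alpha>) * c)"
  by (simp add: fo_single_var Xv_def degx_def)
lemma Nu_single: "Nu (Poly_Mapping.single \<alpha> c) = Poly_Mapping.single \<alpha> (of_nat (degu \<alpha>) * c)"
  by (simp add: fo_single_var Uv_def degu_def)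

lemma lookup_Nx: "Poly_Mapping.lookup (Nx X) \<beta> = of_nat (degx \<beta>) * Poly_Mapping.lookup X \<beta>"
proof -
  have "Nx X = Nx (\<Sum>\<alpha>\<in>Poly_Mapping.keys X. Poly_Mapping.single \<alpha> (Poly_Mapping.lookup X \<alpha>))"
    by (subst poly_expand) (rule refl)
  then show ?thesis
    by (simp add: fo_sum Nx_single lookup_sum lookup_single when_def in_keys_iff)
qed
lemma lookup_Nu: "Poly_Mapping.lookup (Nu X) \<beta> = of_nat (degu \<beta>) * Poly_Mapping.lookup X \<beta>"
proof -
  have "Nu X = Nu (\<Sum>\<alpha>\<in>Poly_Mapping.keys X. Poly_Mapping.single \<alpha> (Poly_Mapping.lookup X \<alpha>))"
    by (subst poly_expand) (rule refl)
  then show ?thesis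
    by (simp add: fo_sum Nu_single lookup_sum lookup_single when_def in_keys_iff)
qed

lemma bihom_iff: "bihom p q X \<longleftrightarrow> Nx X = of_nat p * X \<and> Nu X = of_nat q * X"
proof
  assume "bihom p q X"
  then have h: "\<And>\<alpha>. Poly_Mapping.lookup X \<alpha> \<noteq> 0 \<Longrightarrow> degx \<alpha> = p \<and> degu \<alpha> = q"
    by (auto simp: bihom_def in_keys_iff)
  show "Nx X = of_nat p * X \<and> Nu X = of_nat q * X"
    by (auto intro!: poly_mapping_eqI simp: lookup_Nx lookup_Nu lookup_ofnat_mult) (metis h)+
next
  assume h: "Nx X = of_nat p * X \<and> Nu X = of_nat q * X"
  show "bihom p q X" unfolding bihom_def
  proof
    fix \<alpha> assume "\<alpha> \<in> Poly_Mapping.keys X"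
    then have nz: "Poly_Mapping.lookup X \<alpha> \<noteq> 0" by (simp add: in_keys_iff)
    have "Poly_Mapping.lookup (Nx X) \<alpha> = Poly_Mapping.lookup (of_nat p * X) \<alpha>"
         "Poly_Mapping.lookup (Nu X) \<alpha> = Poly_Mapping.lookup (of_nat q * X) \<alpha>" using h by simp_all
    then show "degx \<alpha> = p \<and> degu \<alpha> = q" using nz by (simp add: lookup_Nx lookup_Nu lookup_ofnat_mult)
  qed
qed

lemma bihom0_pd:
  assumes "bihom 0 q X" shows "pd (Inl j) X = 0"
proof (rule poly_mapping_eqI)
  fix \<beta>
  have "Poly_Mapping.lookup X (\<beta> + dl (Inl j)) = 0"
  proof (rule ccontr)
    assume "Poly_Mapping.lookup X (\<beta> + dl (Inl j)) \<noteq> 0"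
    then have "degx (\<beta> + dl (Inl j)) = 0" using assms by (auto simp: bihom_def in_keys_iff)
    then have "Poly_Mapping.lookup (\<beta> + dl (Inl j)) (Inl j) = 0" by (simp add: degx_def)
    then show False by (simp add: lookup_add)
  qed
  then show "Poly_Mapping.lookup (pd (Inl j) X) \<beta> = Poly_Mapping.lookup 0 \<beta>" by (simp add: lookup_pd)
qed

lemma bihom0'_pd:
  assumes "bihom p 0 X" shows "pd (Inr j) X = 0"
proof (rule poly_mapping_eqI)
  fix \<beta>
  have "Poly_Mapping.lookup X (\<beta> + dl (Inr j)) = 0"
  proof (rule ccontr)
    assume "Poly_Mapping.lookup X (\<beta> + dl (Inr j)) \<noteq> 0"
    then have "degu (\<beta> + dl (Inr j)) = 0" using assms by (auto simp: bihom_def in_keys_iff)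
    then have "Poly_Mapping.lookup (\<beta> + dl (Inr j)) (Inr j) = 0" by (simp add: degu_def)
    then show False by (simp add: lookup_add)
  qed
  then show "Poly_Mapping.lookup (pd (Inr j) X) \<beta> = Poly_Mapping.lookup 0 \<beta>" by (simp add: lookup_pd)
qed

lemma bihom0_ops: assumes "bihom 0 q X" shows "Eo X = 0" "Do X = 0"
  using bihom0_pd[OF assms] by (simp_all add: fo_def so_def pd_commute[of "Inr _"])
lemma bihom0'_ops: assumes "bihom p 0 X" shows "Fo X = 0" "Do X = 0"
  using bihom0'_pd[OF assms] by (simp_all add: fo_def so_def pd_commute[of "Inr _"])

lemma ofnat_mult_eq0: "of_nat K * (X::'n mpoly) = 0 \<Longrightarrow> K \<noteq> 0 \<Longrightarrow> X = 0"
  by (rule poly_mapping_eqI) (metis lookup_ofnat_mult lookup_zero mult_eq_0_iff of_nat_eq_0_iff)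


lemma Nx_nx2pow: "Nx (normx2 ^ n * G) = of_nat (2*n) * (normx2 ^ n * G) + normx2 ^ n * Nx G"
  by (induction n) (simp_all add: mult.assoc algebra_simps)
lemma Nu_nu2pow: "Nu (normu2 ^ n * G) = of_nat (2*n) * (normu2 ^ n * G) + normu2 ^ n * Nu G"
  by (induction n) (simp_all add: mult.assoc algebra_simps)
lemma Nx_nu2pow: "Nx (normu2 ^ n * G) = normu2 ^ n * Nx G"
  by (induction n) (simp_all add: mult.assoc)
lemma Lx_nu2: "Lx (normu2 * G) = normu2 * Lx G" by simp
lemma Lx_nu2pow: "Lx (normu2 ^ n * G) = normu2 ^ n * Lx G"
  by (induction n) (simp_all only: power_Suc power_0 mult_1_left mult.assoc Lx_nu2)
lemma Nu_nx2pow: "Nu (normx2 ^ n * G) = normx2 ^ n * Nu G"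
  by (induction n) (simp_all add: mult.assoc)
lemma Lu_nx2: "Lu (normx2 * G) = normx2 * Lu G" by simp
lemma Lu_nx2pow: "Lu (normx2 ^ n * G) = normx2 ^ n * Lu G"
  by (induction n) (simp_all only: power_Suc power_0 mult_1_left mult.assoc Lu_nx2)

lemma Lx_nx2: "Lx (normx2 * Y) = normx2 * Lx Y + 4 * Nx Y + 2 * mm * Y"
  by simp
lemma Lu_nu2: "Lu (normu2 * Y) = normu2 * Lu Y + 4 * Nu Y + 2 * mm * Y"
  by simp

lemma Lx_nx2pow:
  fixes G :: "'n::finite mpoly"
  assumes "Lx G = 0" "Nx G = of_nat d * G"
  shows "Lx (normx2 ^ n * G) = of_nat (2*n*(card (UNIV::'n set) + 2*d + 2*(n-1))) * (normx2 ^ (n-1) * G)"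
proof (induction n)
  case 0 then show ?case using assms by simp
next
  case (Suc n)
  have NY: "Nx (normx2 ^ n * G) = of_nat (2*n + d) * (normx2 ^ n * G)"
    by (simp only: Nx_nx2pow assms(2)) (simp add: algebra_simps)
  have "Lx (normx2 ^ Suc n * G) = normx2 * Lx (normx2 ^ n * G) + 4 * Nx (normx2 ^ n * G) + 2 * mm * (normx2 ^ n * G)"
    by (simp only: power_Suc mult.assoc Lx_nx2)
  also have "\<dots> = of_nat (2*(Suc n)*(card (UNIV::'n set) + 2*d + 2*n)) * (normx2 ^ n * G)"
  proof (cases n)
    case 0 then show ?thesis using assms by (simp add: algebra_simps)
  next
    case (Suc k)
    have "normx2 * (of_nat (2*n*(card (UNIV::'n set) + 2*d + 2*(n-1))) * (normx2 ^ (n-1) * G))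
       = of_nat (2*n*(card (UNIV::'n set) + 2*d + 2*(n-1))) * (normx2 ^ n * G)"
      using Suc by (simp add: algebra_simps)
    moreover have "2*(Suc n)*(card (UNIV::'n set) + 2*d + 2*n) = 2*n*(card (UNIV::'n set) + 2*d + 2*(n-1)) + 4*(2*n+d) + 2 * card (UNIV::'n set)"
      using Suc by (simp add: algebra_simps)
    ultimately show ?thesis using Suc.IH NY
      by (simp only: of_nat_add of_nat_mult distrib_right) (simp add: algebra_simps)
  qed
  finally show ?case by simp
qed

lemma Lu_nu2pow:
  fixes G :: "'n::finite mpoly"
  assumes "Lu G = 0" "Nu G = of_nat d * G"
  shows "Lu (normu2 ^ n * G) = of_nat (2*n*(card (UNIV::'n set) + 2*d + 2*(n-1))) * (normu2 ^ (n-1) * G)"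
proof (induction n)
  case 0 then show ?case using assms by simp
next
  case (Suc n)
  have NY: "Nu (normu2 ^ n * G) = of_nat (2*n + d) * (normu2 ^ n * G)"
    by (simp only: Nu_nu2pow assms(2)) (simp add: algebra_simps)
  have "Lu (normu2 ^ Suc n * G) = normu2 * Lu (normu2 ^ n * G) + 4 * Nu (normu2 ^ n * G) + 2 * mm * (normu2 ^ n * G)"
    by (simp only: power_Suc mult.assoc Lu_nu2)
  also have "\<dots> = of_nat (2*(Suc n)*(card (UNIV::'n set) + 2*d + 2*n)) * (normu2 ^ n * G)"
  proof (cases n)
    case 0 then show ?thesis using assms by (simp add: algebra_simps)
  next
    case (Suc k)
    have "normu2 * (of_nat (2*n*(card (UNIV::'n set) + 2*d + 2*(n-1))) * (normu2 ^ (n-1) * G))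
       = of_nat (2*n*(card (UNIV::'n set) + 2*d + 2*(n-1))) * (normu2 ^ n * G)"
      using Suc by (simp add: algebra_simps)
    moreover have "2*(Suc n)*(card (UNIV::'n set) + 2*d + 2*n) = 2*n*(card (UNIV::'n set) + 2*d + 2*(n-1)) + 4*(2*n+d) + 2 * card (UNIV::'n set)"
      using Suc by (simp add: algebra_simps)
    ultimately show ?thesis using Suc.IH NY
      by (simp only: of_nat_add of_nat_mult distrib_right) (simp add: algebra_simps)
  qed
  finally show ?case by simp
qed

lemma Lx_iter_sum: "(Lx^^j) (sum f S) = (\<Sum>x\<in>S. (Lx^^j) (f x))"
  by (induction j) (simp_all add: so_sum)
lemma Lx_iter_add: "(Lx^^j) (X + Y) = (Lx^^j) X + (Lx^^j) Y"
  by (induction j) simp_all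
lemma Lx_iter_zero0: "(Lx^^j) 0 = 0"
  by (induction j) simp_all

lemma Lx_iter:
  fixes G :: "'n::finite mpoly"
  assumes "Lx G = 0" "Nx G = of_nat d * G"
  shows "j \<le> n \<Longrightarrow> \<exists>K>0. (Lx^^j) (normx2 ^ n * G) = of_nat K * (normx2 ^ (n-j) * G)"
proof (induction j)
  case 0 then show ?case by (intro exI[of _ 1]) simp
next
  case (Suc j)
  then obtain K where K: "K > 0" "(Lx^^j) (normx2 ^ n * G) = of_nat K * (normx2 ^ (n-j) * G)" by auto
  have cpos: "card (UNIV::'n set) > 0" by (simp add: card_gt_0_iff)
  have e: "n - j - 1 = n - Suc j" by simp
  have "(Lx^^Suc j) (normx2 ^ n * G) = of_nat K * Lx (normx2 ^ (n-j) * G)"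
    by (simp add: K(2))
  also have "\<dots> = of_nat (K * (2*(n-j)*(card (UNIV::'n set) + 2*d + 2*(n-j-1)))) * (normx2 ^ (n - Suc j) * G)"
    by (simp only: Lx_nx2pow[OF assms] e of_nat_mult mult.assoc)
  finally show ?case using K(1) Suc.prems cpos by (intro exI[of _ "K * (2*(n-j)*(card (UNIV::'n set) + 2*d + 2*(n-j-1)))"]) auto
qed

lemma Lx_iter_vanish:
  fixes G :: "'n::finite mpoly"
  assumes "Lx G = 0" "Nx G = of_nat d * G" "n < j"
  shows "(Lx^^j) (normx2 ^ n * G) = 0"
proof -
  obtain K where K: "(Lx^^n) (normx2 ^ n * G) = of_nat K * (normx2 ^ (n-n) * G)"
    using Lx_iter[OF assms(1,2), of n n] by auto
  have j: "j = (j - Suc n) + Suc n" using assms(3) by simp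
  have "(Lx^^j) (normx2 ^ n * G) = (Lx^^(j - Suc n)) (Lx ((Lx^^n) (normx2 ^ n * G)))"
    by (subst j, simp only: funpow_add comp_apply funpow.simps(2))
  also have "\<dots> = 0" using K assms(1) by (simp add: Lx_iter_zero0)
  finally show ?thesis .
qed

lemma U1x:
  fixes G :: "nat \<Rightarrow> 'n::finite mpoly"
  assumes "\<forall>a\<le>A. Lx (G a) = 0 \<and> Nx (G a) = of_nat (d a) * G a" "(\<Sum>a\<le>A. normx2 ^ a * G a) = 0"
  shows "\<forall>a\<le>A. G a = 0"
  using assms
proof (induction A)
  case 0 then show ?case by simp
next
  case (Suc A)
  obtain K where K: "K > 0" "(Lx^^Suc A) (normx2 ^ Suc A * G (Suc A)) = of_nat K * (normx2 ^ (Suc A - Suc A) * G (Suc A))"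
    using Lx_iter[of "G (Suc A)" "d (Suc A)" "Suc A" "Suc A"] Suc.prems(1) by auto
  have v: "(Lx^^Suc A) (normx2 ^ a * G a) = 0" if "a \<le> A" for a
    using Lx_iter_vanish[of "G a" "d a" a "Suc A"] Suc.prems(1) that by auto
  have "0 = (Lx^^Suc A) (\<Sum>a\<le>Suc A. normx2 ^ a * G a)" using Suc.prems(2) by (simp add: Lx_iter_zero0)
  also have "\<dots> = (\<Sum>a\<le>A. (Lx^^Suc A) (normx2 ^ a * G a)) + (Lx^^Suc A) (normx2 ^ Suc A * G (Suc A))"
    by (simp only: Lx_iter_sum sum.atMost_Suc Lx_iter_add)
  also have "\<dots> = of_nat K * G (Suc A)" using v K(2) by simp
  finally have GA0: "of_nat K * G (Suc A) = 0" by (rule sym)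
  have GA: "G (Suc A) = 0" using ofnat_mult_eq0[OF GA0] K(1) by simp
  then have "(\<Sum>a\<le>A. normx2 ^ a * G a) = 0" using Suc.prems(2) by simp
  moreover have "\<forall>a\<le>A. Lx (G a) = 0 \<and> Nx (G a) = of_nat (d a) * G a" using Suc.prems(1) by simp
  ultimately have "\<forall>a\<le>A. G a = 0" using Suc.IH by blast
  then show ?case using GA by (simp add: le_Suc_eq)
qed

lemma Lu_iter_sum: "(Lu^^j) (sum f S) = (\<Sum>x\<in>S. (Lu^^j) (f x))"
  by (induction j) (simp_all add: so_sum)
lemma Lu_iter_add: "(Lu^^j) (X + Y) = (Lu^^j) X + (Lu^^j) Y"
  by (induction j) simp_all
lemma Lu_iter_zero0: "(Lu^^j) 0 = 0"
  by (induction j) simp_all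

lemma Lu_iter:
  fixes G :: "'n::finite mpoly"
  assumes "Lu G = 0" "Nu G = of_nat d * G"
  shows "j \<le> n \<Longrightarrow> \<exists>K>0. (Lu^^j) (normu2 ^ n * G) = of_nat K * (normu2 ^ (n-j) * G)"
proof (induction j)
  case 0 then show ?case by (intro exI[of _ 1]) simp
next
  case (Suc j)
  then obtain K where K: "K > 0" "(Lu^^j) (normu2 ^ n * G) = of_nat K * (normu2 ^ (n-j) * G)" by auto
  have cpos: "card (UNIV::'n set) > 0" by (simp add: card_gt_0_iff)
  have e: "n - j - 1 = n - Suc j" by simp
  have "(Lu^^Suc j) (normu2 ^ n * G) = of_nat K * Lu (normu2 ^ (n-j) * G)"
    by (simp add: K(2))
  also have "\<dots> = of_nat (K * (2*(n-j)*(card (UNIV::'n set) + 2*d + 2*(n-j-1)))) * (normu2 ^ (n - Suc j) * G)"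
    by (simp only: Lu_nu2pow[OF assms] e of_nat_mult mult.assoc)
  finally show ?case using K(1) Suc.prems cpos by (intro exI[of _ "K * (2*(n-j)*(card (UNIV::'n set) + 2*d + 2*(n-j-1)))"]) auto
qed

lemma Lu_iter_vanish:
  fixes G :: "'n::finite mpoly"
  assumes "Lu G = 0" "Nu G = of_nat d * G" "n < j"
  shows "(Lu^^j) (normu2 ^ n * G) = 0"
proof -
  obtain K where K: "(Lu^^n) (normu2 ^ n * G) = of_nat K * (normu2 ^ (n-n) * G)"
    using Lu_iter[OF assms(1,2), of n n] by auto
  have j: "j = (j - Suc n) + Suc n" using assms(3) by simp
  have "(Lu^^j) (normu2 ^ n * G) = (Lu^^(j - Suc n)) (Lu ((Lu^^n) (normu2 ^ n * G)))"
    by (subst j, simp only: funpow_add comp_apply funpow.simps(2))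
  also have "\<dots> = 0" using K assms(1) by (simp add: Lu_iter_zero0)
  finally show ?thesis .
qed

lemma U1u:
  fixes G :: "nat \<Rightarrow> 'n::finite mpoly"
  assumes "\<forall>a\<le>A. Lu (G a) = 0 \<and> Nu (G a) = of_nat (d a) * G a" "(\<Sum>a\<le>A. normu2 ^ a * G a) = 0"
  shows "\<forall>a\<le>A. G a = 0"
  using assms
proof (induction A)
  case 0 then show ?case by simp
next
  case (Suc A)
  obtain K where K: "K > 0" "(Lu^^Suc A) (normu2 ^ Suc A * G (Suc A)) = of_nat K * (normu2 ^ (Suc A - Suc A) * G (Suc A))"
    using Lu_iter[of "G (Suc A)" "d (Suc A)" "Suc A" "Suc A"] Suc.prems(1) by auto
  have v: "(Lu^^Suc A) (normu2 ^ a * G a) = 0" if "a \<le> A" for a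
    using Lu_iter_vanish[of "G a" "d a" a "Suc A"] Suc.prems(1) that by auto
  have "0 = (Lu^^Suc A) (\<Sum>a\<le>Suc A. normu2 ^ a * G a)" using Suc.prems(2) by (simp add: Lu_iter_zero0)
  also have "\<dots> = (\<Sum>a\<le>A. (Lu^^Suc A) (normu2 ^ a * G a)) + (Lu^^Suc A) (normu2 ^ Suc A * G (Suc A))"
    by (simp only: Lu_iter_sum sum.atMost_Suc Lu_iter_add)
  also have "\<dots> = of_nat K * G (Suc A)" using v K(2) by simp
  finally have GA0: "of_nat K * G (Suc A) = 0" by (rule sym)
  have GA: "G (Suc A) = 0" using ofnat_mult_eq0[OF GA0] K(1) by simp
  then have "(\<Sum>a\<le>A. normu2 ^ a * G a) = 0" using Suc.prems(2) by simp
  moreover have "\<forall>a\<le>A. Lu (G a) = 0 \<and> Nu (G a) = of_nat (d a) * G a" using Suc.prems(1) by simp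
  ultimately have "\<forall>a\<le>A. G a = 0" using Suc.IH by blast
  then show ?case using GA by (simp add: le_Suc_eq)
qed


lemma harm2_so: "harm2 X \<longleftrightarrow> Lx X = 0 \<and> Lu X = 0"
  by (simp add: harm2_def Lap_x_so Lap_u_so)

lemma fischer_unique:
  fixes K :: "nat \<Rightarrow> nat \<Rightarrow> 'n::finite mpoly"
  assumes h: "\<forall>a b. 2*a \<le> p \<and> 2*b \<le> q \<longrightarrow> bihom (p - 2*a) (q - 2*b) (K a b) \<and> harm2 (K a b)"
    and s: "(\<Sum>a\<le>p div 2. \<Sum>b\<le>q div 2. normx2 ^ a * normu2 ^ b * K a b) = 0"
  shows "K 0 0 = 0"
proof -
  define G where "G a = (\<Sum>b\<le>q div 2. normu2 ^ b * K a b)" for a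
  have 1: "(\<Sum>a\<le>p div 2. normx2 ^ a * G a) = 0"
    using s by (simp add: G_def sum_distrib_left mult.assoc)
  have 2: "\<forall>a\<le>p div 2. Lx (G a) = 0 \<and> Nx (G a) = of_nat (p - 2*a) * G a"
  proof (intro allI impI)
    fix a assume a: "a \<le> p div 2"
    have hb: "bihom (p - 2*a) (q - 2*b) (K a b) \<and> harm2 (K a b)" if "b \<le> q div 2" for b
    proof -
      have "2*a \<le> p" "2*b \<le> q" using a that by presburger+
      then show ?thesis using h by blast
    qed
    show "Lx (G a) = 0 \<and> Nx (G a) = of_nat (p - 2*a) * G a"
      using hb unfolding G_def
      by (simp add: so_sum fo_sum Lx_nu2pow Nx_nu2pow harm2_so bihom_iff sum_distrib_left mult.left_commute
                del: so_mult fo_mult)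
  qed
  have G0: "G 0 = 0" using U1x[OF 2 1] by simp
  have 3: "\<forall>b\<le>q div 2. Lu (K 0 b) = 0 \<and> Nu (K 0 b) = of_nat (q - 2*b) * K 0 b"
    using h by (auto simp: harm2_so bihom_iff)
  have 4: "(\<Sum>b\<le>q div 2. normu2 ^ b * K 0 b) = 0" using G0 by (simp add: G_def)
  show ?thesis using U1u[OF 3 4] by simp
qed

lemma bihom_diff: "bihom p q X \<Longrightarrow> bihom p q Y \<Longrightarrow> bihom p q (X - Y)"
  by (simp add: bihom_iff algebra_simps)
lemma harm2_diff: "harm2 X \<Longrightarrow> harm2 Y \<Longrightarrow> harm2 (X - Y)"
  by (simp add: harm2_so)

lemma pi_hom_eq:
  fixes Hf :: "nat \<Rightarrow> nat \<Rightarrow> 'n::finite mpoly"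
  assumes h: "\<forall>a b. 2*a \<le> p \<and> 2*b \<le> q \<longrightarrow> bihom (p - 2*a) (q - 2*b) (Hf a b) \<and> harm2 (Hf a b)"
    and s: "P = (\<Sum>a\<le>p div 2. \<Sum>b\<le>q div 2. normx2 ^ a * normu2 ^ b * Hf a b)"
  shows "pi_hom p q P = Hf 0 0"
  unfolding pi_hom_def
proof (rule the_equality)
  show "\<exists>Hf'. (\<forall>a b. 2*a \<le> p \<and> 2*b \<le> q \<longrightarrow> bihom (p - 2*a) (q - 2*b) (Hf' a b) \<and> harm2 (Hf' a b)) \<and>
      P = (\<Sum>a\<le>p div 2. \<Sum>b\<le>q div 2. normx2 ^ a * normu2 ^ b * Hf' a b) \<and> Hf 0 0 = Hf' 0 0"
    using h s by blast
next
  fix H assume "\<exists>Hf'. (\<forall>a b. 2*a \<le> p \<and> 2*b \<le> q \<longrightarrow> bihom (p - 2*a) (q - 2*b) (Hf' a b) \<and> harm2 (Hf' a b)) \<and>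
      P = (\<Sum>a\<le>p div 2. \<Sum>b\<le>q div 2. normx2 ^ a * normu2 ^ b * Hf' a b) \<and> H = Hf' 0 0"
  then obtain Hf' where h': "\<forall>a b. 2*a \<le> p \<and> 2*b \<le> q \<longrightarrow> bihom (p - 2*a) (q - 2*b) (Hf' a b) \<and> harm2 (Hf' a b)"
    and s': "P = (\<Sum>a\<le>p div 2. \<Sum>b\<le>q div 2. normx2 ^ a * normu2 ^ b * Hf' a b)" and H: "H = Hf' 0 0"
    by blast
  have "(\<lambda>a b. Hf' a b - Hf a b) 0 0 = 0"
  proof (rule fischer_unique[where K="\<lambda>a b. Hf' a b - Hf a b"])
    show "\<forall>a b. 2*a \<le> p \<and> 2*b \<le> q \<longrightarrow> bihom (p - 2*a) (q - 2*b) (Hf' a b - Hf a b) \<and> harm2 (Hf' a b - Hf a b)"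
      using h h' by (auto intro: bihom_diff harm2_diff)
    show "(\<Sum>a\<le>p div 2. \<Sum>b\<le>q div 2. normx2 ^ a * normu2 ^ b * (Hf' a b - Hf a b)) = 0"
      using s s' by (simp add: right_diff_distrib sum_subtractf)
  qed
  then show "H = Hf 0 0" using H by simp
qed

lemma pi_hom_zero: "pi_hom p q (0::'n::finite mpoly) = 0"
proof -
  have "pi_hom p q (0::'n mpoly) = (\<lambda>a b. 0::'n mpoly) 0 0"
    by (rule pi_hom_eq) (simp_all add: bihom_def harm2_so)
  then show ?thesis by simp
qed

lemma pi_s_bihom:
  assumes "bihom p q (P::'n::finite mpoly)"
  shows "pi_s P = pi_hom p q P"
proof (cases "P = 0")
  case True then show ?thesis by (simp add: pi_s_def pi_hom_zero)
next
  case False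
  then have ne: "Poly_Mapping.keys P \<noteq> {}" by simp
  have img: "(\<lambda>\<alpha>. (degx \<alpha>, degu \<alpha>)) ` Poly_Mapping.keys P = {(p, q)}"
  proof -
    obtain \<alpha> where "\<alpha> \<in> Poly_Mapping.keys P" using ne by blast
    then show ?thesis using assms unfolding bihom_def by (auto intro!: image_eqI[of _ _ \<alpha>])
  qed
  have "{\<alpha> \<in> Poly_Mapping.keys P. degx \<alpha> = p \<and> degu \<alpha> = q} = Poly_Mapping.keys P"
    using assms by (auto simp: bihom_def)
  then have bp: "bipart p q P = P"
    by (simp add: bipart_def poly_expand[symmetric])
  show ?thesis by (simp add: pi_s_def img bp)
qed


lemma const_add: "const (a + b) = const a + const b" by (simp add: const_def single_add)
lemma const_mult: "const (a * b) = const a * const b" by (simp add: const_def mult_single)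
lemma const_of_nat: "const (of_nat n) = of_nat n" by (simp add: const_def)
lemma const_numeral: "const (numeral n) = numeral n" by (simp add: const_def)
lemma const_one: "const 1 = 1" by (simp add: const_def)
lemma const_zero: "const 0 = 0" by (simp add: const_def)
lemma const_uminus: "const (- a) = - const a" by (simp add: const_def single_uminus)
lemma const_diff: "const (a - b) = const a - const b" by (simp add: const_def single_diff)

lemmas const_hom = const_add const_mult const_diff const_of_nat const_numeral const_uminus const_one const_zero

definition al :: "nat \<Rightarrow> nat \<Rightarrow> complex" where "al m p = of_nat m + 2 * of_nat p - 2"

lemma al_nz: "m > 2 \<Longrightarrow> al m p \<noteq> 0"
proof -
  assume "m > 2"
  then have "(of_nat (m + 2*p - 2)::complex) = of_nat (m + 2*p) - of_nat 2" by (intro of_nat_diff) simp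
  then have "al m p = of_nat (m + 2*p - 2)" by (simp add: al_def)
  moreover have "m + 2*p - 2 \<noteq> 0" using \<open>m > 2\<close> by simp
  ultimately show ?thesis by (metis of_nat_eq_0_iff)
qed

definition biharm :: "nat \<Rightarrow> nat \<Rightarrow> 'n::finite mpoly \<Rightarrow> bool" where
  "biharm p q Q \<longleftrightarrow> bihom p q Q \<and> Lx Q = 0 \<and> Lu Q = 0"

abbreviation M :: "'n::finite itself \<Rightarrow> nat" where "M _ \<equiv> card (UNIV::'n set)"

definition Cf :: "nat \<Rightarrow> nat \<Rightarrow> 'n::finite mpoly \<Rightarrow> 'n mpoly" where
  "Cf p q Q = ux * Q - const (1 / al (card (UNIV::'n set)) p) * (normx2 * Eo Q)
     - const (1 / al (card (UNIV::'n set)) q) * (normu2 * Fo Q)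
     + const (1 / al (card (UNIV::'n set)) p) * const (1 / al (card (UNIV::'n set)) q) * (normx2 * (normu2 * Do Q))"

definition G1 :: "nat \<Rightarrow> nat \<Rightarrow> 'n::finite mpoly \<Rightarrow> 'n mpoly" where
  "G1 p q Q = const (1 / al (card (UNIV::'n set)) p) * (Eo Q - const (1 / al (card (UNIV::'n set)) q) * (normu2 * Do Q))"
definition G2 :: "nat \<Rightarrow> nat \<Rightarrow> 'n::finite mpoly \<Rightarrow> 'n mpoly" where
  "G2 p q Q = const (1 / al (card (UNIV::'n set)) q) * (Fo Q - const (1 / al (card (UNIV::'n set)) p) * (normx2 * Do Q))"
definition G3 :: "nat \<Rightarrow> nat \<Rightarrow> 'n::finite mpoly \<Rightarrow> 'n mpoly" where
  "G3 p q Q = const (1 / al (card (UNIV::'n set)) p) * const (1 / al (card (UNIV::'n set)) q) * Do Q"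

lemma ux_decomp: "ux * Q = Cf p q Q + normx2 * G1 p q Q + normu2 * G2 p q Q + normx2 * (normu2 * G3 p q Q)"
  by (simp add: Cf_def G1_def G2_def G3_def algebra_simps)

context
  fixes Q :: "'n::finite mpoly" and p q :: nat
  assumes bh: "biharm p q Q" and m2: "card (UNIV::'n set) > 2"
begin

lemma eal: "4 * (of_nat p - 1) + 2 * of_nat (card (UNIV::'n set)) = 2 * al (card (UNIV::'n set)) p"
  "4 * (of_nat q - 1) + 2 * of_nat (card (UNIV::'n set)) = 2 * al (card (UNIV::'n set)) q"
  by (simp_all add: al_def algebra_simps)

lemma Qh: "Lx Q = 0" "Lu Q = 0" "Nx Q = of_nat p * Q" "Nu Q = of_nat q * Q"
  using bh by (simp_all add: biharm_def bihom_iff)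

lemma anz: "al (card (UNIV::'n set)) p \<noteq> 0" "al (card (UNIV::'n set)) q \<noteq> 0"
  using m2 al_nz by auto

lemma Cf_Lx: "Lx (Cf p q Q) = 0"
proof -
  define a where "a = 1 / al (card (UNIV::'n set)) p"
  define b where "b = 1 / al (card (UNIV::'n set)) q"
  have "Lx (Cf p q Q) = 2 * Eo Q - const a * (4 * (of_nat p * Eo Q - Eo Q) + 2 * mm * Eo Q) - const b * (2 * (normu2 * Do Q))
        + const a * const b * (normu2 * (4 * (of_nat p * Do Q - Do Q) + 2 * mm * Do Q))"
    unfolding Cf_def a_def[symmetric] b_def[symmetric]
    using Qh by (simp add: Rrules mult.assoc, (simp add: algebra_simps)?)
  also have "\<dots> = const (2 - a * (4 * (of_nat p - 1) + 2 * of_nat (card (UNIV::'n set)))) * Eo Q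
     + const (- 2 * b + a * b * (4 * (of_nat p - 1) + 2 * of_nat (card (UNIV::'n set)))) * (normu2 * Do Q)"
    by (simp add: const_hom algebra_simps)
  also have "\<dots> = 0"
  proof -
    have c: "2 - a * (4 * (of_nat p - 1) + 2 * of_nat (card (UNIV::'n set))) = (0::complex)"
      "- 2 * b + a * b * (4 * (of_nat p - 1) + 2 * of_nat (card (UNIV::'n set))) = (0::complex)"
      unfolding eal a_def b_def using anz by (simp_all add: field_simps)
    show ?thesis by (simp only: c const_zero mult_zero_left add_0)
  qed
  finally show ?thesis .
qed

lemma Cf_Lu: "Lu (Cf p q Q) = 0"
proof -
  define a where "a = 1 / al (card (UNIV::'n set)) p"
  define b where "b = 1 / al (card (UNIV::'n set)) q"
  have "Lu (Cf p q Q) = 2 * Fo Q - const b * (4 * (of_nat q * Fo Q - Fo Q) + 2 * mm * Fo Q) - const a * (2 * (normx2 * Do Q))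
        + const a * const b * (normx2 * (4 * (of_nat q * Do Q - Do Q) + 2 * mm * Do Q))"
    unfolding Cf_def a_def[symmetric] b_def[symmetric]
    using Qh by (simp add: Rrules mult.assoc, (simp add: algebra_simps)?)
  also have "\<dots> = const (2 - b * (4 * (of_nat q - 1) + 2 * of_nat (card (UNIV::'n set)))) * Fo Q
     + const (- 2 * a + a * b * (4 * (of_nat q - 1) + 2 * of_nat (card (UNIV::'n set)))) * (normx2 * Do Q)"
    by (simp add: const_hom algebra_simps)
  also have "\<dots> = 0"
  proof -
    have c: "2 - b * (4 * (of_nat q - 1) + 2 * of_nat (card (UNIV::'n set))) = (0::complex)"
      "- 2 * a + a * b * (4 * (of_nat q - 1) + 2 * of_nat (card (UNIV::'n set))) = (0::complex)"
      unfolding eal a_def b_def using anz by (simp_all add: field_simps)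
    show ?thesis by (simp only: c const_zero mult_zero_left add_0)
  qed
  finally show ?thesis .
qed

lemma G1_Lx: "Lx (G1 p q Q) = 0"
  unfolding G1_def using Qh by (simp add: Rrules mult.assoc)
lemma G2_Lu: "Lu (G2 p q Q) = 0"
  unfolding G2_def using Qh by (simp add: Rrules mult.assoc)
lemma G3_Lx: "Lx (G3 p q Q) = 0"
  unfolding G3_def using Qh by (simp add: Rrules mult.assoc)
lemma G3_Lu: "Lu (G3 p q Q) = 0"
  unfolding G3_def using Qh by (simp add: Rrules mult.assoc)

lemma G1_Lu: "Lu (G1 p q Q) = 0"
proof -
  define a where "a = 1 / al (card (UNIV::'n set)) p"
  define b where "b = 1 / al (card (UNIV::'n set)) q"
  have "Lu (G1 p q Q) = const a * (2 * Do Q - const b * (4 * (of_nat q * Do Q - Do Q) + 2 * mm * Do Q))"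
    unfolding G1_def a_def[symmetric] b_def[symmetric]
    using Qh by (simp add: Rrules mult.assoc, (simp add: algebra_simps)?)
  also have "\<dots> = const (a * (2 - b * (4 * (of_nat q - 1) + 2 * of_nat (card (UNIV::'n set))))) * Do Q"
    by (simp add: const_hom algebra_simps)
  also have "\<dots> = 0"
  proof -
    have c: "a * (2 - b * (4 * (of_nat q - 1) + 2 * of_nat (card (UNIV::'n set)))) = (0::complex)"
      unfolding eal a_def b_def using anz by (simp_all add: field_simps)
    show ?thesis by (simp only: c const_zero mult_zero_left add_0)
  qed
  finally show ?thesis .
qed

lemma G2_Lx: "Lx (G2 p q Q) = 0"
proof -
  define a where "a = 1 / al (card (UNIV::'n set)) p"
  define b where "b = 1 / al (card (UNIV::'n set)) q"
  have "Lx (G2 p q Q) = const b * (2 * Do Q - const a * (4 * (of_nat p * Do Q - Do Q) + 2 * mm * Do Q))"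
    unfolding G2_def a_def[symmetric] b_def[symmetric]
    using Qh by (simp add: Rrules mult.assoc, (simp add: algebra_simps)?)
  also have "\<dots> = const (b * (2 - a * (4 * (of_nat p - 1) + 2 * of_nat (card (UNIV::'n set))))) * Do Q"
    by (simp add: const_hom algebra_simps)
  also have "\<dots> = 0"
  proof -
    have c: "b * (2 - a * (4 * (of_nat p - 1) + 2 * of_nat (card (UNIV::'n set)))) = (0::complex)"
      unfolding eal a_def b_def using anz by (simp_all add: field_simps)
    show ?thesis by (simp only: c const_zero mult_zero_left add_0)
  qed
  finally show ?thesis .
qed

end


lemma bihom_zero[simp]: "bihom p q 0" by (simp add: bihom_def)
lemma bihom_const: "bihom p q X \<Longrightarrow> bihom p q (const c * X)"
  by (simp add: bihom_iff algebra_simps)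
lemma bihom_add: "bihom p q X \<Longrightarrow> bihom p q Y \<Longrightarrow> bihom p q (X + Y)"
  by (simp add: bihom_iff algebra_simps)
lemma bihom_ux: "bihom p q X \<Longrightarrow> bihom (Suc p) (Suc q) (ux * X)"
  by (simp add: bihom_iff algebra_simps)
lemma bihom_nx2: "bihom p q X \<Longrightarrow> bihom (Suc (Suc p)) q (normx2 * X)"
  by (simp add: bihom_iff algebra_simps)
lemma bihom_nu2: "bihom p q X \<Longrightarrow> bihom p (Suc (Suc q)) (normu2 * X)"
  by (simp add: bihom_iff algebra_simps)

lemma bihom_Eo: assumes "bihom p q X" shows "bihom (p - 1) (Suc q) (Eo X)"
proof (cases p)
  case 0 then show ?thesis using bihom0_ops(1)[of q X] assms by simp
next
  case (Suc k)
  then show ?thesis using assms by (simp add: bihom_iff Rrules algebra_simps)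
qed
lemma bihom_Fo: assumes "bihom p q X" shows "bihom (Suc p) (q - 1) (Fo X)"
proof (cases q)
  case 0 then show ?thesis using bihom0'_ops(1)[of p X] assms by simp
next
  case (Suc k)
  then show ?thesis using assms by (simp add: bihom_iff Rrules algebra_simps)
qed
lemma bihom_Do: assumes "bihom p q X" shows "bihom (p - 1) (q - 1) (Do X)"
proof (cases "p = 0 \<or> q = 0")
  case True then show ?thesis using bihom0_ops(2)[of q X] bihom0'_ops(2)[of p X] assms by auto
next
  case False
  then show ?thesis using assms by (simp add: bihom_iff Rrules algebra_simps of_nat_diff)
qed

lemma bihom_nu2Do: assumes "bihom p q X" shows "bihom (p - 1) (Suc q) (normu2 * Do X)"
proof (cases "q = 0")
  case True then show ?thesis using bihom0'_ops(2)[of p X] assms by auto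
next
  case False
  then have "Suc q = Suc (Suc (q - 1))" by simp
  then show ?thesis using bihom_nu2[OF bihom_Do[OF assms]] by metis
qed
lemma bihom_nx2Do: assumes "bihom p q X" shows "bihom (Suc p) (q - 1) (normx2 * Do X)"
proof (cases "p = 0")
  case True then show ?thesis using bihom0_ops(2)[of q X] assms by auto
next
  case False
  then have "Suc p = Suc (Suc (p - 1))" by simp
  then show ?thesis using bihom_nx2[OF bihom_Do[OF assms]] by metis
qed
lemma bihom_nx2Eo: assumes "bihom p q X" shows "bihom (Suc p) (Suc q) (normx2 * Eo X)"
proof (cases "p = 0")
  case True then show ?thesis using bihom0_ops(1)[of q X] assms by auto
next
  case False
  then have "Suc p = Suc (Suc (p - 1))" by simp
  then show ?thesis using bihom_nx2[OF bihom_Eo[OF assms]] by metis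
qed
lemma bihom_nu2Fo: assumes "bihom p q X" shows "bihom (Suc p) (Suc q) (normu2 * Fo X)"
proof (cases "q = 0")
  case True then show ?thesis using bihom0'_ops(1)[of p X] assms by auto
next
  case False
  then have "Suc q = Suc (Suc (q - 1))" by simp
  then show ?thesis using bihom_nu2[OF bihom_Fo[OF assms]] by metis
qed
lemma bihom_nx2nu2Do: assumes "bihom p q X" shows "bihom (Suc p) (Suc q) (normx2 * (normu2 * Do X))"
proof (cases "p = 0")
  case True then show ?thesis using bihom0_ops(2)[of q X] assms by auto
next
  case False
  then have "Suc p = Suc (Suc (p - 1))" by simp
  then show ?thesis using bihom_nx2[OF bihom_nu2Do[OF assms]] by metis
qed

lemma sum_to1: fixes g :: "nat \<Rightarrow> 'a::comm_monoid_add" shows "(\<And>a. a \<ge> 2 \<Longrightarrow> g a = 0) \<Longrightarrow> (A = 0 \<Longrightarrow> g 1 = 0) \<Longrightarrow> sum g {..A} = g 0 + g 1"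
proof -
  assume z: "\<And>a. a \<ge> 2 \<Longrightarrow> g a = 0" and z1: "A = 0 \<Longrightarrow> g 1 = 0"
  show ?thesis
  proof (cases "A = 0")
    case True
    have "{..A} = {0}" using True by auto
    then show ?thesis using z1 True by simp
  next
    case False
    have "sum g {..A} = sum g {..1}"
      by (rule sum.mono_neutral_right) (use False z in auto)
    then show ?thesis by (simp add: numeral_2_eq_2)
  qed
qed

context
  fixes Q :: "'n::finite mpoly" and p q :: nat
  assumes bh: "biharm p q Q" and m2: "card (UNIV::'n set) > 2"
begin

lemma Qb: "bihom p q Q" using bh by (simp add: biharm_def)

lemma Cf_bihom: "bihom (Suc p) (Suc q) (Cf p q Q)"
  unfolding Cf_def using Qb
  by (intro bihom_add bihom_diff bihom_const bihom_ux bihom_nx2Eo bihom_nu2Fo bihom_nx2nu2Do[simplified mult.assoc])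
     (simp_all add: mult.assoc bihom_const bihom_nx2nu2Do)

lemma G1_bihom: "bihom (p - 1) (Suc q) (G1 p q Q)"
  unfolding G1_def using Qb by (intro bihom_const bihom_diff bihom_Eo bihom_nu2Do)
lemma G2_bihom: "bihom (Suc p) (q - 1) (G2 p q Q)"
  unfolding G2_def using Qb by (intro bihom_const bihom_diff bihom_Fo bihom_nx2Do)
lemma G3_bihom: "bihom (p - 1) (q - 1) (G3 p q Q)"
  unfolding G3_def mult.assoc using Qb by (intro bihom_const bihom_Do)
lemma G1_0: "p = 0 \<Longrightarrow> G1 p q Q = 0"
  using Qb bihom0_ops[of q Q] by (simp add: G1_def)
lemma G2_0: "q = 0 \<Longrightarrow> G2 p q Q = 0"
  using Qb bihom0'_ops[of p Q] by (simp add: G2_def)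
lemma G3_0: "p = 0 \<or> q = 0 \<Longrightarrow> G3 p q Q = 0"
  using Qb bihom0_ops[of q Q] bihom0'_ops[of p Q] by (auto simp: G3_def)

lemma Cop_Cf: "Cop Q = Cf p q Q"
proof -
  define Hf where "Hf a b = (if a = 0 then (if b = 0 then Cf p q Q else if b = 1 then G2 p q Q else 0)
      else if a = 1 then (if b = 0 then G1 p q Q else if b = 1 then G3 p q Q else 0) else 0)" for a b :: nat
  have h: "\<forall>a b. 2*a \<le> Suc p \<and> 2*b \<le> Suc q \<longrightarrow> bihom (Suc p - 2*a) (Suc q - 2*b) (Hf a b) \<and> harm2 (Hf a b)"
  proof (intro allI impI)
    fix a b :: nat assume ab: "2*a \<le> Suc p \<and> 2*b \<le> Suc q"
    have "a = 0 \<or> a = 1 \<or> a \<ge> 2" "b = 0 \<or> b = 1 \<or> b \<ge> 2" by auto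
    then show "bihom (Suc p - 2*a) (Suc q - 2*b) (Hf a b) \<and> harm2 (Hf a b)"
      using Cf_bihom G1_bihom G2_bihom G3_bihom ab
        Cf_Lx[OF bh m2] Cf_Lu[OF bh m2] G1_Lx[OF bh m2] G1_Lu[OF bh m2] G2_Lx[OF bh m2] G2_Lu[OF bh m2]
        G3_Lx[OF bh m2] G3_Lu[OF bh m2]
      by (auto simp: Hf_def harm2_so)
  qed
  have s: "ux * Q = (\<Sum>a\<le>Suc p div 2. \<Sum>b\<le>Suc q div 2. normx2 ^ a * normu2 ^ b * Hf a b)"
  proof -
    have qz: "Suc q div 2 = 0 \<Longrightarrow> q = 0" by presburger
    have i0: "(\<Sum>b\<le>Suc q div 2. normx2 ^ 0 * normu2 ^ b * Hf 0 b) = Cf p q Q + normu2 * G2 p q Q"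
      by (subst sum_to1) (auto simp: Hf_def G2_0)
    have i1: "(\<Sum>b\<le>Suc q div 2. normx2 ^ 1 * normu2 ^ b * Hf 1 b) = normx2 * G1 p q Q + normx2 * (normu2 * G3 p q Q)"
    proof -
      have z: "Suc q div 2 = 0 \<Longrightarrow> G3 p q Q = 0" using G3_0 qz by blast
      show ?thesis by (subst sum_to1) (auto simp: Hf_def mult.assoc z)
    qed
    have "(\<Sum>a\<le>Suc p div 2. \<Sum>b\<le>Suc q div 2. normx2 ^ a * normu2 ^ b * Hf a b)
      = (\<Sum>b\<le>Suc q div 2. normx2 ^ 0 * normu2 ^ b * Hf 0 b) + (\<Sum>b\<le>Suc q div 2. normx2 ^ 1 * normu2 ^ b * Hf 1 b)"
    proof -
      have pz: "Suc p div 2 = 0 \<Longrightarrow> p = 0" by presburger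
      have z1: "Suc p div 2 = 0 \<Longrightarrow> G1 p q Q = 0" "Suc p div 2 = 0 \<Longrightarrow> G3 p q Q = 0"
        using G1_0 G3_0 pz by blast+
      show ?thesis
      proof (rule sum_to1)
        fix a :: nat assume "a \<ge> 2" then show "(\<Sum>b\<le>Suc q div 2. normx2 ^ a * normu2 ^ b * Hf a b) = 0"
          by (simp add: Hf_def)
      next
        assume A: "Suc p div 2 = 0"
        show "(\<Sum>b\<le>Suc q div 2. normx2 ^ 1 * normu2 ^ b * Hf 1 b) = 0"
          by (simp add: Hf_def z1[OF A] cong: if_cong)
      qed
    qed
    also have "\<dots> = ux * Q" unfolding i0 i1 ux_decomp[of Q p q] by (simp add: algebra_simps)
    finally show ?thesis by simp
  qed
  have "Cop Q = pi_hom (Suc p) (Suc q) (ux * Q)"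
    unfolding Cop_def by (rule pi_s_bihom[OF bihom_ux[OF Qb]])
  also have "\<dots> = Hf 0 0" by (rule pi_hom_eq[OF h s])
  finally show ?thesis by (simp add: Hf_def)
qed

lemma Cf_biharm: "biharm (Suc p) (Suc q) (Cf p q Q)"
  using Cf_bihom Cf_Lx[OF bh m2] Cf_Lu[OF bh m2] by (simp add: biharm_def)

lemma Do_biharm: "biharm (p - 1) (q - 1) (Do Q)"
  using bihom_Do[OF Qb] Qh(1,2)[OF bh m2] by (simp add: biharm_def Rrules)

lemma Aop_Do: "Aop Q = Do Q"
proof -
  define Hf where "Hf a b = (if a = 0 \<and> b = 0 then Do Q else 0)" for a b :: nat
  have h: "\<forall>a b. 2*a \<le> p - 1 \<and> 2*b \<le> q - 1 \<longrightarrow> bihom (p - 1 - 2*a) (q - 1 - 2*b) (Hf a b) \<and> harm2 (Hf a b)"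
    using Do_biharm by (auto simp: Hf_def biharm_def harm2_so)
  have s: "Do Q = (\<Sum>a\<le>(p - 1) div 2. \<Sum>b\<le>(q - 1) div 2. normx2 ^ a * normu2 ^ b * Hf a b)"
  proof -
    have inner: "(\<Sum>b\<le>(q - 1) div 2. normx2 ^ a * normu2 ^ b * Hf a b) = normx2 ^ a * Hf a 0" for a
      by (subst sum_to1) (auto simp: Hf_def)
    show ?thesis unfolding inner by (subst sum_to1) (auto simp: Hf_def)
  qed
  have "Aop Q = pi_hom (p - 1) (q - 1) (Do Q)"
    unfolding Aop_def Dux_so by (rule pi_s_bihom[OF bihom_Do[OF Qb]])
  also have "\<dots> = Hf 0 0" by (rule pi_hom_eq[OF h s])
  finally show ?thesis by (simp add: Hf_def)
qed

end


lemma const_power: "const (x ^ n) = const x ^ n"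
  by (induction n) (simp_all add: const_mult const_one)
lemmas const_hom2 = const_hom const_power

lemma Om_add: "Om (X + Y) = Om X + Om Y" unfolding Om_def by (simp add: algebra_simps)
lemma Om_diff: "Om (X - Y) = Om X - Om Y" unfolding Om_def by (simp add: algebra_simps)
lemma Om_const: "Om (const c * X) = const c * Om X" unfolding Om_def by (simp add: algebra_simps)

lemma Om_Cf: "Om (Cf p q X) = Cf p q (Om X)"
  unfolding Cf_def
  by (simp only: Om_add Om_diff Om_const mult.assoc Om_ux Om_nx2 Om_nu2 Om_Eo Om_Fo Om_Do)

lemma Cf_const: "Cf p q (const c * X) = const c * Cf p q X"
  unfolding Cf_def by (simp add: algebra_simps)

definition s0 :: "nat \<Rightarrow> nat \<Rightarrow> nat \<Rightarrow> complex \<Rightarrow> complex" where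
  "s0 m p q lam = of_nat m + of_nat p + of_nat q - 2 * (1 / al m p) * (of_nat p - of_nat q)
     + (1 / al m p + 1 / al m q) * (lam + of_nat p - of_nat q + (of_nat p ^ 2 + of_nat q ^ 2 + (of_nat m - 3) * (of_nat p + of_nat q)))"
definition rr :: "nat \<Rightarrow> nat \<Rightarrow> nat \<Rightarrow> complex" where
  "rr m p q = (1 - 2 * (1 / al m p)) * (1 - 2 * (1 / al m q))"

context
  fixes Q :: "'n::finite mpoly" and p q :: nat and lam :: complex
  assumes bh: "biharm p q Q" and m2: "card (UNIV::'n set) > 2" and om: "Om Q = const lam * Q"
begin

lemma E2: "2 * Eo (Fo Q) = 2 * (ux * Do Q) - const (lam + of_nat p - of_nat q + (of_nat p ^ 2 + of_nat q ^ 2 + (of_nat (card (UNIV::'n set)) - 3) * (of_nat p + of_nat q))) * Q"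
proof -
  have "Om Q = 2 * (ux * Do Q) - 2 * Eo (Fo Q) - const (of_nat p - of_nat q + (of_nat p ^ 2 + of_nat q ^ 2 + (of_nat (card (UNIV::'n set)) - 3) * (of_nat p + of_nat q))) * Q"
    unfolding Om_def using Qh[OF bh m2] by (simp add: Rrules, simp add: const_hom2 algebra_simps power2_eq_square)
  then show ?thesis using om by (simp add: const_hom2 algebra_simps)
qed

lemma E1:
  defines "a \<equiv> const (1 / al (card (UNIV::'n set)) p)" and "b \<equiv> const (1 / al (card (UNIV::'n set)) q)"
  shows "Do (Cf p q Q) = ux * Do Q + (mm + of_nat p + of_nat q) * Q - a * (normx2 * Eo (Do Q)) - a * (2 * Eo (Fo Q))
     - 2 * a * (of_nat p * Q - of_nat q * Q) - b * (normu2 * Fo (Do Q)) - b * (2 * Eo (Fo Q))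
     + a * b * (normx2 * (normu2 * Do (Do Q)) + 2 * (normx2 * Eo (Do Q)) + 2 * (normu2 * Fo (Do Q)) + 4 * (ux * Do Q))"
  unfolding Cf_def a_def b_def using Qh[OF bh m2]
  by (simp add: Rrules mult.assoc, (simp add: algebra_simps)?)

lemma DoCf: "Do (Cf p q Q) = const (s0 (card (UNIV::'n set)) p q lam) * Q + const (rr (card (UNIV::'n set)) p q) * Cf (p - 1) (q - 1) (Do Q)"
proof -
  define A where "A = al (card (UNIV::'n set)) p"
  define B where "B = al (card (UNIV::'n set)) q"
  define ia where "ia = 1 / A"
  define ib where "ib = 1 / B"
  have L: "Do (Cf p q Q) = const (s0 (card (UNIV::'n set)) p q lam) * Q
     + (const (rr (card (UNIV::'n set)) p q) * (ux * Do Q) - const (ia * (1 - 2 * ib)) * (normx2 * Eo (Do Q))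
        - const (ib * (1 - 2 * ia)) * (normu2 * Fo (Do Q)) + const (ia * ib) * (normx2 * (normu2 * Do (Do Q))))"
  proof -
    have s: "s0 (card (UNIV::'n set)) p q lam = of_nat (card (UNIV::'n set)) + of_nat p + of_nat q - 2 * ia * (of_nat p - of_nat q)
     + (ia + ib) * (lam + of_nat p - of_nat q + (of_nat p ^ 2 + of_nat q ^ 2 + (of_nat (card (UNIV::'n set)) - 3) * (of_nat p + of_nat q)))"
      by (simp add: s0_def ia_def ib_def A_def B_def)
    have r: "rr (card (UNIV::'n set)) p q = (1 - 2 * ia) * (1 - 2 * ib)"
      by (simp add: rr_def ia_def ib_def A_def B_def)
    have e1: "const (1 / al (card (UNIV::'n set)) p) = const ia" "const (1 / al (card (UNIV::'n set)) q) = const ib"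
      by (simp_all add: ia_def ib_def A_def B_def)
    show ?thesis unfolding E1 E2 s r e1 by (simp add: const_hom2 algebra_simps)
  qed
  show ?thesis
  proof (cases "p = 0 \<or> q = 0")
    case True
    then have "Do Q = 0" using Qb[OF bh m2] bihom0_ops(2)[of q Q] bihom0'_ops(2)[of p Q] by auto
    then show ?thesis using L by (simp add: Cf_def)
  next
    case False
    then have pq: "p \<ge> 1" "q \<ge> 1" by auto
    have a1: "al (card (UNIV::'n set)) (p - 1) = A - 2" "al (card (UNIV::'n set)) (q - 1) = B - 2"
      using pq by (simp_all add: A_def B_def al_def of_nat_diff algebra_simps)
    have nz: "A \<noteq> 0" "B \<noteq> 0" "A - 2 \<noteq> 0" "B - 2 \<noteq> 0"
      using al_nz[OF m2, of p] al_nz[OF m2, of q] al_nz[OF m2, of "p - 1"] al_nz[OF m2, of "q - 1"] a1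
      by (simp_all add: A_def B_def)
    have sc: "rr (card (UNIV::'n set)) p q * (1 / (A - 2)) = ia * (1 - 2 * ib)"
      "rr (card (UNIV::'n set)) p q * (1 / (B - 2)) = ib * (1 - 2 * ia)"
      "ia * (1 - 2 * ib) * (1 / (B - 2)) = ia * ib"
    proof -
      have f: "1 - 2 * ia = (A - 2) * ia" "1 - 2 * ib = (B - 2) * ib" "ia * A = 1" "ib * B = 1"
        unfolding ia_def ib_def using nz by (simp_all add: field_simps)
      have r: "rr (card (UNIV::'n set)) p q = (A - 2) * ia * ((B - 2) * ib)"
        unfolding rr_def A_def[symmetric] B_def[symmetric] ia_def[symmetric] ib_def[symmetric] f(1,2) ..
      show "rr (card (UNIV::'n set)) p q * (1 / (A - 2)) = ia * (1 - 2 * ib)"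
        unfolding r f(2) using nz by (simp add: field_simps)
      show "rr (card (UNIV::'n set)) p q * (1 / (B - 2)) = ib * (1 - 2 * ia)"
        unfolding r f(1) using nz by (simp add: field_simps)
      have u: "(A - 2) * (1 / (A - 2)) = 1" "(B - 2) * (1 / (B - 2)) = 1" using nz by simp_all
      have "ia * ((B - 2) * ib) * (1 / (B - 2)) = ia * ib * ((B - 2) * (1 / (B - 2)))"
        by (simp only: ac_simps)
      then show "ia * (1 - 2 * ib) * (1 / (B - 2)) = ia * ib"
        unfolding f(2) u by simp
    qed
    define R where "R = rr (card (UNIV::'n set)) p q"
    define ja where "ja = 1 / (A - 2)"
    define jb where "jb = 1 / (B - 2)"
    have "const R * Cf (p - 1) (q - 1) (Do Q)
       = const R * (ux * Do Q) - const (R * ja) * (normx2 * Eo (Do Q)) - const (R * jb) * (normu2 * Fo (Do Q))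
         + const (R * ja * jb) * (normx2 * (normu2 * Do (Do Q)))"
      unfolding Cf_def a1 ja_def[symmetric] jb_def[symmetric] by (simp add: const_mult algebra_simps)
    then have "const (rr (card (UNIV::'n set)) p q) * Cf (p - 1) (q - 1) (Do Q)
       = const (rr (card (UNIV::'n set)) p q) * (ux * Do Q)
         - const (rr (card (UNIV::'n set)) p q * (1 / (A - 2))) * (normx2 * Eo (Do Q))
         - const (rr (card (UNIV::'n set)) p q * (1 / (B - 2))) * (normu2 * Fo (Do Q))
         + const (rr (card (UNIV::'n set)) p q * (1 / (A - 2)) * (1 / (B - 2))) * (normx2 * (normu2 * Do (Do Q)))"
      unfolding R_def ja_def jb_def .
    then show ?thesis unfolding sc(1,2) unfolding sc(3) L by simp
  qed
qed

end

lemma divide_id: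
  fixes X s D N Y a b :: complex
  assumes "a \<noteq> 0" "b \<noteq> 0" "X * b = s * a * b - 2 * D * b + N * b + N * a + Y * a"
  shows "X / a = (s - 2 * (1 / a) * D + (1 / a + 1 / b) * N) + Y / b"
proof -
  have "X / a = (X * b) / (a * b)" using assms(1,2) by simp
  also have "\<dots> = (s * a * b - 2 * D * b + N * b + N * a + Y * a) / (a * b)" using assms(3) by simp
  also have "\<dots> = (s - 2 * (1 / a) * D + (1 / a + 1 / b) * N) + Y / b"
    using assms(1,2) by (simp add: field_simps)
  finally show ?thesis .
qed

lemma recid_gen:
  fixes K L M I :: complex
  assumes A: "M + 2 * (K + I) - 2 \<noteq> 0" and B: "M + 2 * (L + I) - 2 \<noteq> 0" and A2: "M + 2 * (K + I) - 4 \<noteq> 0"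
  shows "(I + 1) * (K + M / 2 + (I + 1) - 1) * (K + L + M + (I + 1) - 3) / (K + M / 2 + (I + 1) - 2)
       = (M + (K + I) + (L + I) - 2 * (1 / (M + 2 * (K + I) - 2)) * ((K + I) - (L + I))
          + (1 / (M + 2 * (K + I) - 2) + 1 / (M + 2 * (L + I) - 2)) *
            ((- (K - L) - K ^ 2 - L ^ 2 - (M - 3) * (K + L)) + (K + I) - (L + I) + ((K + I) ^ 2 + (L + I) ^ 2 + (M - 3) * ((K + I) + (L + I)))))
         + (1 - 2 / (M + 2 * (K + I) - 2)) * (1 - 2 / (M + 2 * (L + I) - 2)) *
           (I * (K + M / 2 + I - 1) * (K + L + M + I - 3) / (K + M / 2 + I - 2))"
proof -
  define a where "a = M + 2 * (K + I) - 2"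
  define b where "b = M + 2 * (L + I) - 2"
  define S where "S = K + L + M + I"
  define N where "N = (- (K - L) - K ^ 2 - L ^ 2 - (M - 3) * (K + L)) + (K + I) - (L + I) + ((K + I) ^ 2 + (L + I) ^ 2 + (M - 3) * ((K + I) + (L + I)))"
  have a0: "a \<noteq> 0" "b \<noteq> 0" "a - 2 \<noteq> 0" using A B A2 by (simp_all add: a_def b_def algebra_simps)
  have l1: "(I + 1) * (K + M / 2 + (I + 1) - 1) * (K + L + M + (I + 1) - 3) / (K + M / 2 + (I + 1) - 2)
     = (I + 1) * (a + 2) * (S - 2) / a"
  proof -
    have eqs: "K + M / 2 + (I + 1) - 2 = a / 2" "K + M / 2 + (I + 1) - 1 = (a + 2) / 2" "K + L + M + (I + 1) - 3 = S - 2"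
      by (simp_all add: a_def S_def field_simps)
    show ?thesis unfolding eqs using a0 by (simp add: field_simps)
  qed
  have l2: "(1 - 2 / (M + 2 * (K + I) - 2)) * (1 - 2 / (M + 2 * (L + I) - 2)) *
           (I * (K + M / 2 + I - 1) * (K + L + M + I - 3) / (K + M / 2 + I - 2)) = I * (b - 2) * (S - 3) / b"
  proof -
    have eqs: "K + M / 2 + I - 1 = a / 2" "K + M / 2 + I - 2 = (a - 2) / 2" "K + L + M + I - 3 = S - 3"
      "M + 2 * (K + I) - 2 = a" "M + 2 * (L + I) - 2 = b"
      by (simp_all add: a_def b_def S_def field_simps)
    show ?thesis unfolding eqs using a0 by (simp add: field_simps)
  qed
  have l3: "(I + 1) * (a + 2) * (S - 2) / a = (M + (K + I) + (L + I) - 2 * (1 / a) * ((K + I) - (L + I)) + (1 / a + 1 / b) * N)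
          + I * (b - 2) * (S - 3) / b"
  proof -
    have "(I + 1) * (a + 2) * (S - 2) * b = (M + (K + I) + (L + I)) * a * b - 2 * ((K + I) - (L + I)) * b + N * b + N * a
          + I * (b - 2) * (S - 3) * a"
      unfolding a_def b_def S_def N_def by (simp add: algebra_simps power2_eq_square)
    then show ?thesis using a0 divide_id by blast
  qed
  show ?thesis
    apply (subst l1)
    apply (subst l2)
    apply (fold a_def b_def N_def)
    apply (rule l3)
    done
qed

definition lamH :: "nat \<Rightarrow> nat \<Rightarrow> nat \<Rightarrow> complex" where
  "lamH m k l = - (of_nat k - of_nat l) - of_nat k ^ 2 - of_nat l ^ 2 - (of_nat m - 3) * (of_nat k + of_nat l)"

lemma cnz: "(of_nat m + 2 * (of_nat k + of_nat i) - c :: complex) \<noteq> 0" if "real m > c" "c \<ge> 0" for c :: real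
proof
  assume "(of_nat m + 2 * (of_nat k + of_nat i) - c :: complex) = 0"
  then have "Re (of_nat m + 2 * (of_nat k + of_nat i) - c :: complex) = 0" by simp
  then show False using that by simp
qed

lemma conv: "complex_of_real (cconst m j k l) = of_nat j * (of_nat k + of_nat m / 2 + of_nat j - 1) * (of_nat k + of_nat l + of_nat m + of_nat j - 3) / (of_nat k + of_nat m / 2 + of_nat j - 2)"
  by (simp add: cconst_def)

lemma rec_step:
  assumes "m > 4"
  shows "complex_of_real (cconst m (Suc i) k l) = s0 m (k + i) (l + i) (lamH m k l) + rr m (k + i) (l + i) * complex_of_real (cconst m i k l)"
proof -
  have h: "(of_nat m + 2 * (of_nat k + of_nat i) - 2 :: complex) \<noteq> 0" "(of_nat m + 2 * (of_nat l + of_nat i) - 2 :: complex) \<noteq> 0"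
     "(of_nat m + 2 * (of_nat k + of_nat i) - 4 :: complex) \<noteq> 0"
    using cnz[of 2 m k i] cnz[of 2 m l i] cnz[of 4 m k i] assms by auto
  show ?thesis
    using recid_gen[OF h]
    by (simp add: conv s0_def rr_def al_def lamH_def algebra_simps)
qed


lemma Hkl_facts:
  assumes "H \<in> Hkl k l"
  shows "bihom k l H" "Lx H = 0" "Lu H = 0" "Do H = 0" "Fo H = 0" "Nx H = of_nat k * H" "Nu H = of_nat l * H"
  using assms by (auto simp: Hkl_def Lap_x_so Lap_u_so Dux_so Xdu_fo bihom_iff)

lemma Om_H:
  assumes "H \<in> Hkl k l"
  shows "Om H = const (lamH (card (UNIV::'n set)) k l) * (H::'n::finite mpoly)"
  unfolding Om_def lamH_def using Hkl_facts[OF assms]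
  by (simp add: Rrules, simp add: const_hom2 algebra_simps power2_eq_square)

lemma main_ind:
  fixes H :: "'n::finite mpoly"
  assumes m4: "card (UNIV :: 'n set) > 4" and H: "H \<in> Hkl k l"
  shows "biharm (k + i) (l + i) ((Cop ^^ i) H) \<and> Om ((Cop ^^ i) H) = const (lamH (card (UNIV::'n set)) k l) * (Cop ^^ i) H
     \<and> Cf (k + i - 1) (l + i - 1) (Do ((Cop ^^ i) H)) = const (complex_of_real (cconst (card (UNIV::'n set)) i k l)) * (Cop ^^ i) H"
proof (induction i)
  case 0
  have "biharm k l H" using Hkl_facts[OF H] by (simp add: biharm_def)
  moreover have "cconst (card (UNIV::'n set)) 0 k l = 0" by (simp add: cconst_def)
  ultimately show ?case using Om_H[OF H] Hkl_facts(4)[OF H] by (simp add: Cf_def const_zero)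
next
  case (Suc i)
  define X where "X = (Cop ^^ i) H"
  have m2: "card (UNIV :: 'n set) > 2" using m4 by simp
  have bX: "biharm (k + i) (l + i) X" and oX: "Om X = const (lamH (card (UNIV::'n set)) k l) * X"
    and cX: "Cf (k + i - 1) (l + i - 1) (Do X) = const (complex_of_real (cconst (card (UNIV::'n set)) i k l)) * X"
    using Suc.IH by (simp_all add: X_def)
  have step: "(Cop ^^ Suc i) H = Cf (k + i) (l + i) X"
    using Cop_Cf[OF bX m2] by (simp add: X_def)
  have b: "biharm (k + Suc i) (l + Suc i) ((Cop ^^ Suc i) H)"
    using Cf_biharm[OF bX m2] step by simp
  have o: "Om ((Cop ^^ Suc i) H) = const (lamH (card (UNIV::'n set)) k l) * (Cop ^^ Suc i) H"
    unfolding step Om_Cf oX Cf_const ..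
  have d: "Do ((Cop ^^ Suc i) H) = const (complex_of_real (cconst (card (UNIV::'n set)) (Suc i) k l)) * X"
  proof -
    have "Do ((Cop ^^ Suc i) H) = const (s0 (card (UNIV::'n set)) (k + i) (l + i) (lamH (card (UNIV::'n set)) k l)) * X
        + const (rr (card (UNIV::'n set)) (k + i) (l + i)) * (const (complex_of_real (cconst (card (UNIV::'n set)) i k l)) * X)"
      unfolding step DoCf[OF bX m2 oX] cX ..
    also have "\<dots> = const (complex_of_real (cconst (card (UNIV::'n set)) (Suc i) k l)) * X"
      unfolding rec_step[OF m4] by (simp add: const_hom algebra_simps)
    finally show ?thesis .
  qed
  have c: "Cf (k + Suc i - 1) (l + Suc i - 1) (Do ((Cop ^^ Suc i) H)) = const (complex_of_real (cconst (card (UNIV::'n set)) (Suc i) k l)) * (Cop ^^ Suc i) H"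
  proof -
    have e: "k + Suc i - 1 = k + i" "l + Suc i - 1 = l + i" by simp_all
    have "Cf (k + i) (l + i) (Do ((Cop ^^ Suc i) H)) = const (complex_of_real (cconst (card (UNIV::'n set)) (Suc i) k l)) * Cf (k + i) (l + i) X"
      unfolding d Cf_const ..
    then show ?thesis unfolding e step[symmetric] .
  qed
  show ?case using b o c by blast
qed

theorem proposition4p3:
  fixes H :: "'n::finite mpoly" and k l i :: nat
  assumes "card (UNIV :: 'n set) > 4" and "l \<le> k" and "H \<in> Hkl k l" and "0 < i"
  shows "Aop ((Cop ^^ i) H) = const (complex_of_real (cconst (card (UNIV :: 'n set)) i k l)) * (Cop ^^ (i - 1)) H"
proof -
  obtain j where j: "i = Suc j" using assms(4) by (cases i) auto
  have m2: "card (UNIV :: 'n set) > 2" using assms(1) by simp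
  have bj: "biharm (k + j) (l + j) ((Cop ^^ j) H)" and cj: "Om ((Cop ^^ j) H) = const (lamH (card (UNIV::'n set)) k l) * (Cop ^^ j) H"
    and dj: "Cf (k + j - 1) (l + j - 1) (Do ((Cop ^^ j) H)) = const (complex_of_real (cconst (card (UNIV::'n set)) j k l)) * (Cop ^^ j) H"
    using main_ind[OF assms(1,3), of j] by auto
  have bi: "biharm (k + i) (l + i) ((Cop ^^ i) H)" using main_ind[OF assms(1,3), of i] by auto
  have step: "(Cop ^^ i) H = Cf (k + j) (l + j) ((Cop ^^ j) H)"
    using Cop_Cf[OF bj m2] j by simp
  have "Aop ((Cop ^^ i) H) = Do ((Cop ^^ i) H)" by (rule Aop_Do[OF bi m2])
  also have "\<dots> = const (s0 (card (UNIV::'n set)) (k + j) (l + j) (lamH (card (UNIV::'n set)) k l)) * (Cop ^^ j) H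
        + const (rr (card (UNIV::'n set)) (k + j) (l + j)) * (const (complex_of_real (cconst (card (UNIV::'n set)) j k l)) * (Cop ^^ j) H)"
    unfolding step DoCf[OF bj m2 cj] dj ..
  also have "\<dots> = const (complex_of_real (cconst (card (UNIV::'n set)) i k l)) * (Cop ^^ j) H"
    unfolding j rec_step[OF assms(1)] by (simp add: const_hom algebra_simps)
  finally show ?thesis using j by simp
qed


end
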